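(* Let $n\geqslant 4$ be an integer and let $0<\eta,\vartheta\leqslant 1$. Let $\boldsymbol{X}=\langle X_s:s\in\binom{[n]}{2}\rangle$ be a $\{0,1\}$-valued, $\eta$-spreadable, two-dimensional random array on $[n]$ such that for every $i,j,k,\ell\in[n]$ with $i<j<k<\ell$, \[ \mathbb{E}[X_{\{i,k\}}X_{\{i,\ell\}}X_{\{j,k\}}X_{\{j,\ell\}}]\leqslant \mathbb{E}[X_{\{i,k\}}]\,\mathbb{E}[X_{\{i,\ell\}}]\,\mathbb{E}[X_{\{j,k\}}]\,\mathbb{E}[X_{\{j,\ell\}}]+\vartheta. \] Then for every nonempty $\mathcal{F}\subseteq\binom{[n]}{2}$ such that $\bigcup\mathcal{F}$ has cardinality at most $n/2$ we have \[ \Big|\mathbb{E}\Big[\prod_{s\in\mathcal{F}}X_s\Big]-\prod_{s\in\mathcal{F}}\mathbb{E}[X_s]\Big|\leqslant 400\,|\mathcal{F}|\,\big(n^{-1/16}+\eta^{1/16}+\vartheta^{1/16}\big). \]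
   Context: $[n]=\{1,\dots,n\}$ and $\binom{I}{d}$ denotes the set of $d$-element subsets of $I$. A two-dimensional random array on $[n]$ is a stochastic process $\boldsymbol{X}=\langle X_s:s\in\binom{[n]}{2}\rangle$; for $J\subseteq[n]$ with $|J|\geqslant2$, $\boldsymbol{X}_J=\langle X_s:s\in\binom{J}{2}\rangle$. For $\eta\geqslant 0$, $\boldsymbol{X}$ is $\eta$-spreadable if for every $J,K\subseteq[n]$ with $|J|=|K|\geqslant 2$ the total variation distance between the laws of $\boldsymbol{X}_J$ and $\boldsymbol{X}_K$ (identified via the increasing bijection $J\to K$) is at most $\eta$. *)

theory Defs
  imports "HOL-Probability.Probability"
begin

definition pairs :: "nat set \<Rightarrow> nat set set" where
  "pairs I = {s. s \<subseteq> I \<and> card s = 2}"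

definition enum :: "nat set \<Rightarrow> nat \<Rightarrow> nat" where
  "enum J i = sorted_list_of_set J ! (i - 1)"

text \<open>The subarray X_J, transported to the index set [card J] via the increasing
  bijection [card J] -> J (coordinates outside pairs [card J] are set to 0).\<close>
definition subarray :: "(nat set \<Rightarrow> 'a \<Rightarrow> real) \<Rightarrow> nat set \<Rightarrow> 'a \<Rightarrow> (nat set \<Rightarrow> real)" where
  "subarray X J \<omega> = (\<lambda>s. if s \<in> pairs {1..card J} then X (enum J ` s) \<omega> else 0)"

text \<open>eta-spreadability: total variation distance between the laws of X_J and X_K
  (identified via the increasing bijection) is at most eta, i.e. for every event A
  of the (finite) value space the probabilities differ by at most eta.\<close>
definition spreadable :: "'a measure \<Rightarrow> nat \<Rightarrow> real \<Rightarrow> (nat set \<Rightarrow> 'a \<Rightarrow> real) \<Rightarrow> bool" where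
  "spreadable M n \<eta> X \<longleftrightarrow>
     (\<forall>J K. J \<subseteq> {1..n} \<longrightarrow> K \<subseteq> {1..n} \<longrightarrow> card J = card K \<longrightarrow> 2 \<le> card J \<longrightarrow>
       (\<forall>A. \<bar>measure M {\<omega> \<in> space M. subarray X J \<omega> \<in> A}
             - measure M {\<omega> \<in> space M. subarray X K \<omega> \<in> A}\<bar> \<le> \<eta>))"

end

theory Submission
  imports Defs
begin

lemma enum_map:
  assumes "finite J" "strict_mono_on J \<sigma>"
  shows "sorted_list_of_set (\<sigma> ` J) = map \<sigma> (sorted_list_of_set J)"
proof -
  let ?l = "sorted_list_of_set J"
  have s: "sorted_wrt (<) ?l" by (simp add: sorted_list_of_set.strict_sorted_key_list_of_set)
  have "sorted_wrt (<) (map \<sigma> ?l)"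
    unfolding sorted_wrt_map
    by (rule sorted_wrt_mono_rel[OF _ s]) (use assms in \<open>auto simp: strict_mono_on_def\<close>)
  moreover have "card (\<sigma> ` J) = card J"
    using assms by (simp add: card_image strict_mono_on_imp_inj_on)
  ultimately show ?thesis using assms
    by (subst sorted_list_of_set_unique[symmetric]) auto
qed

lemma enum_bij:
  assumes "finite J"
  shows "bij_betw (enum J) {1..card J} J"
proof -
  have "bij_betw ((!) (sorted_list_of_set J)) {..<card J} J"
    by (rule bij_betw_nth) (use assms in auto)
  moreover have "bij_betw (\<lambda>i. i - 1) {1..card J} {..<card J}"
    by (rule bij_betw_byWitness[where f'="\<lambda>i. i+1"]) auto
  ultimately have "bij_betw ((!) (sorted_list_of_set J) \<circ> (\<lambda>i. i - 1)) {1..card J} J"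
    by (rule bij_betw_trans[rotated])
  moreover have "enum J = (\<lambda>x. sorted_list_of_set J ! (x - 1))" by (rule ext) (simp add: enum_def)
  ultimately show ?thesis by (simp add: comp_def)
qed

lemma enum_image:
  assumes "finite J" "strict_mono_on J \<sigma>" "i \<in> {1..card J}"
  shows "enum (\<sigma> ` J) i = \<sigma> (enum J i)"
proof -
  have "card (\<sigma> ` J) = card J"
    using assms by (simp add: card_image strict_mono_on_imp_inj_on)
  moreover have "i - 1 < length (sorted_list_of_set J)" using assms by auto
  ultimately show ?thesis using assms unfolding enum_def
    by (simp add: enum_map)
qed

locale arr =
  fixes M :: "'a measure" and X :: "nat set \<Rightarrow> 'a \<Rightarrow> real"
    and n :: nat and \<eta> \<theta> :: real
  assumes PS: "prob_space M"
    and n4: "n \<ge> 4"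
    and eta: "0 < \<eta>" "\<eta> \<le> 1" and theta: "0 < \<theta>" "\<theta> \<le> 1"
    and meas: "\<And>s. s \<in> pairs {1..n} \<Longrightarrow> X s \<in> borel_measurable M"
    and bin: "\<And>s \<omega>. s \<in> pairs {1..n} \<Longrightarrow> \<omega> \<in> space M \<Longrightarrow> X s \<omega> \<in> {0, 1}"
    and spr: "spreadable M n \<eta> X"
    and box: "\<And>i j k l. 1 \<le> i \<Longrightarrow> i < j \<Longrightarrow> j < k \<Longrightarrow> k < l \<Longrightarrow> l \<le> n \<Longrightarrow>
       (\<integral>\<omega>. X {i,k} \<omega> * X {i,l} \<omega> * X {j,k} \<omega> * X {j,l} \<omega> \<partial>M)
         \<le> (\<integral>\<omega>. X {i,k} \<omega> \<partial>M) * (\<integral>\<omega>. X {i,l} \<omega> \<partial>M)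
            * (\<integral>\<omega>. X {j,k} \<omega> \<partial>M) * (\<integral>\<omega>. X {j,l} \<omega> \<partial>M) + \<theta>"

sublocale arr \<subseteq> prob_space M by (rule PS)

context arr begin

definition bnd :: "('a \<Rightarrow> real) \<Rightarrow> bool" where
  "bnd f \<longleftrightarrow> f \<in> borel_measurable M \<and> (\<exists>B. \<forall>\<omega>\<in>space M. \<bar>f \<omega>\<bar> \<le> B)"

lemma bnd_int: "bnd f \<Longrightarrow> integrable M f"
  unfolding bnd_def by (auto intro!: integrable_const_bound AE_I2)

lemma bnd_X: "s \<in> pairs {1..n} \<Longrightarrow> bnd (X s)"
  unfolding bnd_def using meas bin by (auto intro!: exI[of _ 1]) (metis abs_0 abs_one insertE le_numeral_extra(1,4) singletonD)

lemma bnd_const: "bnd (\<lambda>\<omega>. c)"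
  unfolding bnd_def by auto

lemma bnd_add: "bnd f \<Longrightarrow> bnd g \<Longrightarrow> bnd (\<lambda>\<omega>. f \<omega> + g \<omega>)"
  unfolding bnd_def
proof (elim conjE exE, intro conjI)
  fix B C assume "\<forall>\<omega>\<in>space M. \<bar>f \<omega>\<bar> \<le> B" "\<forall>\<omega>\<in>space M. \<bar>g \<omega>\<bar> \<le> C"
  then show "\<exists>D. \<forall>\<omega>\<in>space M. \<bar>f \<omega> + g \<omega>\<bar> \<le> D"
    by (intro exI[of _ "B+C"]) (auto intro: order.trans[OF abs_triangle_ineq] add_mono)
qed auto

lemma bnd_diff: "bnd f \<Longrightarrow> bnd g \<Longrightarrow> bnd (\<lambda>\<omega>. f \<omega> - g \<omega>)"
  unfolding bnd_def
proof (elim conjE exE, intro conjI)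
  fix B C assume "\<forall>\<omega>\<in>space M. \<bar>f \<omega>\<bar> \<le> B" "\<forall>\<omega>\<in>space M. \<bar>g \<omega>\<bar> \<le> C"
  then show "\<exists>D. \<forall>\<omega>\<in>space M. \<bar>f \<omega> - g \<omega>\<bar> \<le> D"
    by (intro exI[of _ "B+C"]) (auto intro: order.trans[OF abs_triangle_ineq4] add_mono)
qed auto

lemma bnd_mult: "bnd f \<Longrightarrow> bnd g \<Longrightarrow> bnd (\<lambda>\<omega>. f \<omega> * g \<omega>)"
  unfolding bnd_def
proof (elim conjE exE, intro conjI)
  fix B C assume "\<forall>\<omega>\<in>space M. \<bar>f \<omega>\<bar> \<le> B" "\<forall>\<omega>\<in>space M. \<bar>g \<omega>\<bar> \<le> C"
  then show "\<exists>D. \<forall>\<omega>\<in>space M. \<bar>f \<omega> * g \<omega>\<bar> \<le> D"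
    by (intro exI[of _ "B*C"]) (auto simp: abs_mult intro!: mult_mono)
qed auto

lemma bnd_sum: "(\<And>i. i \<in> I \<Longrightarrow> bnd (f i)) \<Longrightarrow> bnd (\<lambda>\<omega>. \<Sum>i\<in>I. f i \<omega>)"
proof (induction I rule: infinite_finite_induct)
  case (insert x F) then show ?case by (simp add: bnd_add)
qed (auto simp: bnd_const)

lemma bnd_prod: "(\<And>i. i \<in> I \<Longrightarrow> bnd (f i)) \<Longrightarrow> bnd (\<lambda>\<omega>. \<Prod>i\<in>I. f i \<omega>)"
proof (induction I rule: infinite_finite_induct)
  case (insert x F) then show ?case by (simp add: bnd_mult)
qed (auto simp: bnd_const)

lemma bnd_pow: "bnd f \<Longrightarrow> bnd (\<lambda>\<omega>. f \<omega> ^ k)"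
  by (induction k) (auto simp: bnd_const bnd_mult)

lemmas bnd_intros = bnd_const bnd_add bnd_diff bnd_mult bnd_sum bnd_prod bnd_pow bnd_X

lemma E_prod_meas:
  assumes "\<And>i. i \<in> I \<Longrightarrow> \<phi> i \<in> pairs {1..n}" "finite I"
  shows "expectation (\<lambda>\<omega>. \<Prod>i\<in>I. X (\<phi> i) \<omega>) = prob {\<omega>\<in>space M. \<forall>i\<in>I. X (\<phi> i) \<omega> = 1}"
proof -
  let ?S = "{\<omega>\<in>space M. \<forall>i\<in>I. X (\<phi> i) \<omega> = 1}"
  have "expectation (\<lambda>\<omega>. \<Prod>i\<in>I. X (\<phi> i) \<omega>) = expectation (indicator ?S)"
  proof (rule Bochner_Integration.integral_cong[OF refl])
    fix \<omega> assume w: "\<omega> \<in> space M"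
    show "(\<Prod>i\<in>I. X (\<phi> i) \<omega>) = indicator ?S \<omega>"
    proof (cases "\<forall>i\<in>I. X (\<phi> i) \<omega> = 1")
      case True then show ?thesis using w by (simp add: indicator_def)
    next
      case False
      then obtain i where i: "i \<in> I" "X (\<phi> i) \<omega> \<noteq> 1" by auto
      then have "X (\<phi> i) \<omega> = 0" using bin[OF assms(1)[OF i(1)] w] by auto
      then have "(\<Prod>i\<in>I. X (\<phi> i) \<omega>) = 0"
        using i assms(2) by (auto intro: prod_zero)
      then show ?thesis using False i by (simp add: indicator_def)
    qed
  qed
  also have "\<dots> = prob ?S"
    by (simp add: Bochner_Integration.integral_indicator Int_absorb2 subsetI)
  finally show ?thesis .
qed

end

context arr begin

lemma pairs_mono: "A \<subseteq> B \<Longrightarrow> pairs A \<subseteq> pairs B"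
  unfolding pairs_def by auto

lemma pair_image:
  assumes "s \<in> pairs J" "inj_on \<sigma> J" "\<sigma> ` J \<subseteq> K"
  shows "\<sigma> ` s \<in> pairs K"
proof -
  have "inj_on \<sigma> s" using assms by (auto simp: pairs_def intro: inj_on_subset)
  then show ?thesis using assms by (auto simp: pairs_def card_image)
qed

lemma transfer:
  assumes J: "J \<subseteq> {1..n}" and sm: "strict_mono_on J \<sigma>" and img: "\<sigma> ` J \<subseteq> {1..n}"
    and G: "G \<subseteq> pairs J" and c2: "2 \<le> card J"
  shows "\<bar>expectation (\<lambda>\<omega>. \<Prod>s\<in>G. X s \<omega>) - expectation (\<lambda>\<omega>. \<Prod>s\<in>G. X (\<sigma> ` s) \<omega>)\<bar> \<le> \<eta>"
proof -
  have fJ: "finite J" using J finite_subset by blast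
  define k where "k = card J"
  define K where "K = \<sigma> ` J"
  have inj: "inj_on \<sigma> J" using sm by (rule strict_mono_on_imp_inj_on)
  have cK: "card K = k" unfolding K_def k_def using inj by (simp add: card_image)
  define G0 where "G0 = {s0 \<in> pairs {1..k}. enum J ` s0 \<in> G}"
  define A where "A = {v::nat set \<Rightarrow> real. \<forall>s0\<in>G0. v s0 = 1}"
  have K: "K \<subseteq> {1..n}" using img K_def by simp
  have sp: "\<bar>measure M {\<omega> \<in> space M. subarray X J \<omega> \<in> A}
             - measure M {\<omega> \<in> space M. subarray X K \<omega> \<in> A}\<bar> \<le> \<eta>"
  proof -
    have "\<forall>A. \<bar>measure M {\<omega> \<in> space M. subarray X J \<omega> \<in> A}
             - measure M {\<omega> \<in> space M. subarray X K \<omega> \<in> A}\<bar> \<le> \<eta>"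
      using spr J K cK c2 unfolding spreadable_def k_def by presburger
    then show ?thesis by (rule spec)
  qed
  have bij: "bij_betw (enum J) {1..k} J" unfolding k_def using fJ by (rule enum_bij)
  have imgG: "(\<lambda>s0. enum J ` s0) ` G0 = G"
  proof
    show "(\<lambda>s0. enum J ` s0) ` G0 \<subseteq> G" unfolding G0_def by auto
    show "G \<subseteq> (\<lambda>s0. enum J ` s0) ` G0"
    proof
      fix s assume s: "s \<in> G"
      then have sJ: "s \<subseteq> J" and cs: "card s = 2" using G by (auto simp: pairs_def)
      define s0 where "s0 = {i \<in> {1..k}. enum J i \<in> s}"
      have e: "enum J ` s0 = s"
      proof
        show "enum J ` s0 \<subseteq> s" unfolding s0_def by auto
        show "s \<subseteq> enum J ` s0"
        proof
          fix x assume "x \<in> s"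
          then have "x \<in> enum J ` {1..k}" using sJ bij by (auto simp: bij_betw_def)
          then show "x \<in> enum J ` s0" unfolding s0_def using \<open>x \<in> s\<close> by auto
        qed
      qed
      have "inj_on (enum J) s0" using bij unfolding s0_def bij_betw_def by (auto intro: inj_on_subset)
      then have "card s0 = 2" using e cs card_image by fastforce
      then have "s0 \<in> G0" unfolding G0_def pairs_def using e s s0_def by auto
      then show "s \<in> (\<lambda>s0. enum J ` s0) ` G0" using e by blast
    qed
  qed
  have eq1: "{\<omega> \<in> space M. subarray X J \<omega> \<in> A} = {\<omega> \<in> space M. \<forall>s\<in>G. X s \<omega> = 1}"
  proof -
    have "subarray X J \<omega> \<in> A \<longleftrightarrow> (\<forall>s0\<in>G0. X (enum J ` s0) \<omega> = 1)" for \<omega>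
      unfolding A_def subarray_def G0_def k_def by auto
    also have "\<dots> \<omega> \<longleftrightarrow> (\<forall>s\<in>G. X s \<omega> = 1)" for \<omega>
      using imgG by blast
    finally show ?thesis by auto
  qed
  have eq2: "{\<omega> \<in> space M. subarray X K \<omega> \<in> A} = {\<omega> \<in> space M. \<forall>s\<in>G. X (\<sigma> ` s) \<omega> = 1}"
  proof -
    have en: "enum K ` s0 = \<sigma> ` (enum J ` s0)" if "s0 \<in> G0" for s0
    proof -
      have "s0 \<subseteq> {1..card J}" using that unfolding G0_def pairs_def k_def by auto
      then show ?thesis unfolding K_def image_image
        using enum_image[OF fJ sm] by (intro image_cong) auto
    qed
    have "subarray X K \<omega> \<in> A \<longleftrightarrow> (\<forall>s0\<in>G0. X (enum K ` s0) \<omega> = 1)" for \<omega>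
      unfolding A_def subarray_def G0_def cK by auto
    also have "\<dots> \<omega> \<longleftrightarrow> (\<forall>s0\<in>G0. X (\<sigma> ` (enum J ` s0)) \<omega> = 1)" for \<omega>
      using en by auto
    also have "\<dots> \<omega> \<longleftrightarrow> (\<forall>s\<in>G. X (\<sigma> ` s) \<omega> = 1)" for \<omega>
      using imgG by blast
    finally show ?thesis by auto
  qed
  have "G \<subseteq> Pow J" using G by (auto simp: pairs_def)
  then have fG: "finite G" using fJ by (meson finite_Pow_iff finite_subset)
  have GP: "s \<in> pairs {1..n}" if "s \<in> G" for s
    using that G pairs_mono[OF J] by auto
  have GP2: "\<sigma> ` s \<in> pairs {1..n}" if "s \<in> G" for s
    using that G by (intro pair_image[OF _ inj img]) auto
  have "expectation (\<lambda>\<omega>. \<Prod>s\<in>G. X s \<omega>) = prob {\<omega> \<in> space M. \<forall>s\<in>G. X s \<omega> = 1}"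
    using E_prod_meas[of G "\<lambda>s. s"] GP fG by simp
  moreover have "expectation (\<lambda>\<omega>. \<Prod>s\<in>G. X (\<sigma> ` s) \<omega>) = prob {\<omega> \<in> space M. \<forall>s\<in>G. X (\<sigma> ` s) \<omega> = 1}"
    using E_prod_meas[of G "\<lambda>s. \<sigma> ` s"] GP2 fG by simp
  ultimately show ?thesis using sp eq1 eq2 by simp
qed

end

context arr begin

lemma E_sum: "(\<And>i. i \<in> I \<Longrightarrow> bnd (f i)) \<Longrightarrow>
  expectation (\<lambda>\<omega>. \<Sum>i\<in>I. f i \<omega>) = (\<Sum>i\<in>I. expectation (f i))"
  by (rule Bochner_Integration.integral_sum) (auto intro: bnd_int)

lemma E_add: "bnd f \<Longrightarrow> bnd g \<Longrightarrow> expectation (\<lambda>\<omega>. f \<omega> + g \<omega>) = expectation f + expectation g"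
  by (rule Bochner_Integration.integral_add) (auto intro: bnd_int)

lemma E_diff: "bnd f \<Longrightarrow> bnd g \<Longrightarrow> expectation (\<lambda>\<omega>. f \<omega> - g \<omega>) = expectation f - expectation g"
  by (rule Bochner_Integration.integral_diff) (auto intro: bnd_int)

lemma E_cmult: "expectation (\<lambda>\<omega>. (c::real) * f \<omega>) = c * expectation f"
  by (rule integral_mult_right_zero)

lemma E_mono: "bnd f \<Longrightarrow> bnd g \<Longrightarrow> (\<And>\<omega>. \<omega> \<in> space M \<Longrightarrow> f \<omega> \<le> g \<omega>) \<Longrightarrow> expectation f \<le> expectation g"
  by (rule integral_mono) (auto intro: bnd_int)

lemma E_le_const: "bnd f \<Longrightarrow> (\<And>\<omega>. \<omega> \<in> space M \<Longrightarrow> f \<omega> \<le> c) \<Longrightarrow> expectation f \<le> c"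
  using E_mono[of f "\<lambda>_. c"] by (simp add: bnd_const prob_space)

lemma E_ge_const: "bnd f \<Longrightarrow> (\<And>\<omega>. \<omega> \<in> space M \<Longrightarrow> c \<le> f \<omega>) \<Longrightarrow> c \<le> expectation f"
  using E_mono[of "\<lambda>_. c" f] by (simp add: bnd_const prob_space)

lemma jensen: "bnd f \<Longrightarrow> (expectation f)\<^sup>2 \<le> expectation (\<lambda>\<omega>. (f \<omega>)\<^sup>2)"
  using variance_eq[of f] variance_positive[of f] bnd_int bnd_pow[of f 2] by auto

definition p where "p = expectation (X {1,2})"

lemma X01: "s \<in> pairs {1..n} \<Longrightarrow> \<omega> \<in> space M \<Longrightarrow> 0 \<le> X s \<omega> \<and> X s \<omega> \<le> 1"
  using bin by fastforce

lemma EX01: "s \<in> pairs {1..n} \<Longrightarrow> 0 \<le> expectation (X s) \<and> expectation (X s) \<le> 1"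
  using X01 bnd_X by (auto intro!: E_le_const E_ge_const)

lemma pair_ex: "s \<in> pairs A \<Longrightarrow> \<exists>a b. a < b \<and> s = {a,b} \<and> a \<in> A \<and> b \<in> A"
  unfolding pairs_def card_2_iff
  by (auto elim!: exE) (metis insert_commute insert_subset linorder_neqE_nat)

lemma pair12: "{1,2} \<in> pairs {1..n}"
  using n4 by (auto simp: pairs_def)

lemma p01: "0 \<le> p" "p \<le> 1"
  using EX01[OF pair12] unfolding p_def by auto

lemma Ep: assumes "s \<in> pairs {1..n}" shows "\<bar>expectation (X s) - p\<bar> \<le> \<eta>"
proof -
  obtain a b where ab: "a < b" "s = {a,b}" "a \<in> {1..n}" "b \<in> {1..n}" using pair_ex[OF assms] by blast
  define \<sigma> where "\<sigma> = (\<lambda>i::nat. if i = 1 then a else b)"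
  have sm: "strict_mono_on {1,2} \<sigma>" using ab unfolding \<sigma>_def strict_mono_on_def by auto
  have "\<bar>expectation (\<lambda>\<omega>. \<Prod>s\<in>{{1,2}}. X s \<omega>) - expectation (\<lambda>\<omega>. \<Prod>s\<in>{{1,2}}. X (\<sigma> ` s) \<omega>)\<bar> \<le> \<eta>"
    by (rule transfer[OF _ sm]) (use n4 ab in \<open>auto simp: \<sigma>_def pairs_def\<close>)
  moreover have "\<sigma> ` {1,2} = s" using ab by (auto simp: \<sigma>_def)
  ultimately show ?thesis by (simp add: p_def abs_minus_commute)
qed

lemma Ep_lo: "s \<in> pairs {1..n} \<Longrightarrow> p - \<eta> \<le> expectation (X s)"
  using Ep by fastforce
lemma Ep_hi: "s \<in> pairs {1..n} \<Longrightarrow> expectation (X s) \<le> p + \<eta>"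
  using Ep by fastforce

lemma C4:
  assumes "1 \<le> a" "a < b" "b < c" "c < d" "d \<le> n"
  shows "expectation (\<lambda>\<omega>. X {a,c} \<omega> * X {a,d} \<omega> * X {b,c} \<omega> * X {b,d} \<omega>) \<le> p^4 + \<theta> + 16 * \<eta>"
proof -
  define \<sigma> where "\<sigma> = (\<lambda>i::nat. if i = 1 then a else if i = 2 then b else if i = 3 then c else d)"
  have sm: "strict_mono_on {1,2,3,4} \<sigma>" using assms unfolding \<sigma>_def strict_mono_on_def by auto
  define G where "G = {{1,3},{1,4},{2,3},{2,4::nat}}"
  have tr: "\<bar>expectation (\<lambda>\<omega>. \<Prod>s\<in>G. X s \<omega>) - expectation (\<lambda>\<omega>. \<Prod>s\<in>G. X (\<sigma> ` s) \<omega>)\<bar> \<le> \<eta>"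
    by (rule transfer[OF _ sm]) (use n4 assms in \<open>auto simp: \<sigma>_def pairs_def G_def\<close>)
  have g1: "(\<Prod>s\<in>G. X s \<omega>) = X {1,3} \<omega> * X {1,4} \<omega> * X {2,3} \<omega> * X {2,4} \<omega>" for \<omega>
    by (simp add: G_def doubleton_eq_iff)
  have g2: "(\<Prod>s\<in>G. X (\<sigma> ` s) \<omega>) = X {a,c} \<omega> * X {a,d} \<omega> * X {b,c} \<omega> * X {b,d} \<omega>" for \<omega>
  proof -
    have im: "\<sigma>`{1,3} = {a,c}" "\<sigma>`{1,4} = {a,d}" "\<sigma>`{2,3} = {b,c}" "\<sigma>`{2,4} = {b,d}"
       "\<sigma>`{Suc 0,3} = {a,c}" "\<sigma>`{Suc 0,4} = {a,d}"
      by (auto simp: \<sigma>_def)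
    show ?thesis using assms by (simp del: image_insert image_empty add: G_def doubleton_eq_iff im mult.assoc)
  qed
  have bx: "expectation (\<lambda>\<omega>. X {1,3} \<omega> * X {1,4} \<omega> * X {2,3} \<omega> * X {2,4} \<omega>)
     \<le> expectation (X {1,3}) * expectation (X {1,4}) * expectation (X {2,3}) * expectation (X {2,4}) + \<theta>"
    using box[of 1 2 3 4] n4 by simp
  have P: "{i,j} \<in> pairs {1..n}" if "1 \<le> i" "i < j" "j \<le> n" for i j
    using that by (auto simp: pairs_def)
  have e13: "0 \<le> expectation (X {1,3})" "expectation (X {1,3}) \<le> p + \<eta>" using EX01 Ep_hi P[of 1 3] n4 by auto
  have e14: "0 \<le> expectation (X {1,4})" "expectation (X {1,4}) \<le> p + \<eta>" using EX01 Ep_hi P[of 1 4] n4 by auto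
  have e23: "0 \<le> expectation (X {2,3})" "expectation (X {2,3}) \<le> p + \<eta>" using EX01 Ep_hi P[of 2 3] n4 by auto
  have e24: "0 \<le> expectation (X {2,4})" "expectation (X {2,4}) \<le> p + \<eta>" using EX01 Ep_hi P[of 2 4] n4 by auto
  have "expectation (X {1,3}) * expectation (X {1,4}) * expectation (X {2,3}) * expectation (X {2,4})
        \<le> (p+\<eta>) * (p+\<eta>) * (p+\<eta>) * (p+\<eta>)"
    using e13 e14 e23 e24 by (intro mult_mono) auto
  also have "\<dots> \<le> p^4 + 15 * \<eta>"
  proof -
    have "(p+\<eta>) * (p+\<eta>) * (p+\<eta>) * (p+\<eta>) = p^4 + \<eta> * (4*p^3 + 6*p^2*\<eta> + 4*p*\<eta>^2 + \<eta>^3)"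
      by (simp add: algebra_simps power2_eq_square power3_eq_cube power4_eq_xxxx)
    moreover have "4*p^3 + 6*p^2*\<eta> + 4*p*\<eta>^2 + \<eta>^3 \<le> 15"
    proof -
      have "p^3 \<le> 1" "p^2*\<eta> \<le> 1" "p*\<eta>^2 \<le> 1" "\<eta>^3 \<le> 1"
        using p01 eta by (auto intro!: power_le_one mult_le_one)
      then show ?thesis by linarith
    qed
    ultimately show ?thesis using eta by (simp add: mult_left_le)
  qed
  finally have h: "expectation (X {1,3}) * expectation (X {1,4}) * expectation (X {2,3}) * expectation (X {2,4}) \<le> p^4 + 15 * \<eta>" .
  have q1: "(\<lambda>\<omega>. \<Prod>s\<in>G. X s \<omega>) = (\<lambda>\<omega>. X {1,3} \<omega> * X {1,4} \<omega> * X {2,3} \<omega> * X {2,4} \<omega>)"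
    using g1 by auto
  have q2: "(\<lambda>\<omega>. \<Prod>s\<in>G. X (\<sigma> ` s) \<omega>) = (\<lambda>\<omega>. X {a,c} \<omega> * X {a,d} \<omega> * X {b,c} \<omega> * X {b,d} \<omega>)"
    using g2 by auto
  show ?thesis using tr[unfolded q1 q2] bx h by linarith
qed

end

lemma sq_sum: "(\<Sum>i\<in>A. a i)^2 = (\<Sum>i\<in>A. \<Sum>j\<in>A. (a i * a j::real))"
  by (simp add: power2_eq_square sum_product)

lemma swap3: "(\<Sum>a\<in>A. \<Sum>b\<in>B. \<Sum>c\<in>C. (F a b c::real)) = (\<Sum>b\<in>B. \<Sum>c\<in>C. \<Sum>a\<in>A. F a b c)"
proof -
  have "(\<Sum>a\<in>A. \<Sum>b\<in>B. \<Sum>c\<in>C. F a b c) = (\<Sum>b\<in>B. \<Sum>a\<in>A. \<Sum>c\<in>C. F a b c)"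
    by (rule sum.swap)
  also have "\<dots> = (\<Sum>b\<in>B. \<Sum>c\<in>C. \<Sum>a\<in>A. F a b c)"
    by (rule sum.cong[OF refl], rule sum.swap)
  finally show ?thesis .
qed

lemma swap4: "(\<Sum>a\<in>A. \<Sum>b\<in>B. \<Sum>c\<in>C. \<Sum>d\<in>D. (F a b c d::real)) = (\<Sum>c\<in>C. \<Sum>d\<in>D. \<Sum>a\<in>A. \<Sum>b\<in>B. F a b c d)"
proof -
  have "(\<Sum>a\<in>A. \<Sum>b\<in>B. \<Sum>c\<in>C. \<Sum>d\<in>D. F a b c d) = (\<Sum>a\<in>A. \<Sum>c\<in>C. \<Sum>d\<in>D. \<Sum>b\<in>B. F a b c d)"
    by (rule sum.cong[OF refl], rule swap3)
  also have "\<dots> = (\<Sum>c\<in>C. \<Sum>d\<in>D. \<Sum>a\<in>A. \<Sum>b\<in>B. F a b c d)"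
    by (rule swap3)
  finally show ?thesis .
qed

lemma cs_sum: "finite A \<Longrightarrow> (\<Sum>i\<in>A. (a i::real))^2 \<le> real (card A) * (\<Sum>i\<in>A. (a i)^2)"
  using sum_squared_le_sum_of_squares[of a A] by (simp add: mult.commute)

lemma cs_sum2: "finite A \<Longrightarrow> (\<Sum>i\<in>A. \<Sum>j\<in>A. (a i j::real))^2 \<le> real (card A)^2 * (\<Sum>i\<in>A. \<Sum>j\<in>A. (a i j)^2)"
proof -
  assume f: "finite A"
  have "(\<Sum>i\<in>A. \<Sum>j\<in>A. a i j)^2 \<le> real (card A) * (\<Sum>i\<in>A. (\<Sum>j\<in>A. a i j)^2)"
    by (rule cs_sum[OF f])
  also have "\<dots> \<le> real (card A) * (\<Sum>i\<in>A. real (card A) * (\<Sum>j\<in>A. (a i j)^2))"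
    by (intro mult_left_mono sum_mono cs_sum[OF f]) auto
  finally show ?thesis by (simp add: power2_eq_square sum_distrib_left mult.assoc)
qed

locale core = arr +
  fixes N A0 B0 :: nat and Y W :: "nat \<Rightarrow> 'a \<Rightarrow> real" and Z :: "'a \<Rightarrow> real"
  assumes N1: "1 \<le> N" and A1: "1 \<le> A0" and AB: "A0 + N \<le> B0" and Bn: "B0 + N \<le> n + 1"
    and bY: "\<And>r. r < N \<Longrightarrow> bnd (Y r)" and Y01: "\<And>r \<omega>. r < N \<Longrightarrow> \<omega> \<in> space M \<Longrightarrow> 0 \<le> Y r \<omega> \<and> Y r \<omega> \<le> 1"
    and bW: "\<And>r. r < N \<Longrightarrow> bnd (W r)" and W01: "\<And>r \<omega>. r < N \<Longrightarrow> \<omega> \<in> space M \<Longrightarrow> 0 \<le> W r \<omega> \<and> W r \<omega> \<le> 1"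
    and bZ: "bnd Z" and Z01: "\<And>\<omega>. \<omega> \<in> space M \<Longrightarrow> 0 \<le> Z \<omega> \<and> Z \<omega> \<le> 1"
begin

definition x where "x r r' = (if r < N \<and> r' < N then X {A0 + r, B0 + r'} else (\<lambda>_. 0))"
definition H where "H r \<omega> = (\<Sum>r'<N. (x r r' \<omega> - p) * W r' \<omega>)"
definition S where "S \<omega> = Z \<omega> * (\<Sum>r<N. Y r \<omega> * H r \<omega>)"
definition g where "g r' r'' \<omega> = (\<Sum>r<N. (x r r' \<omega> - p) * (x r r'' \<omega> - p))"
definition c where "c r' r'' \<omega> = (\<Sum>r<N. x r r' \<omega> * x r r'' \<omega>)"
definition d where "d r' \<omega> = (\<Sum>r<N. x r r' \<omega>)"
definition d' where "d' r \<omega> = (\<Sum>r'<N. x r r' \<omega>)"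
definition c' where "c' r1 r2 \<omega> = (\<Sum>r'<N. x r1 r' \<omega> * x r2 r' \<omega>)"
definition T where "T r1 r2 r3 r4 \<omega> = x r1 r3 \<omega> * x r1 r4 \<omega> * (x r2 r3 \<omega> * x r2 r4 \<omega>)"
definition Q where "Q \<omega> = (\<Sum>r3<N. \<Sum>r4<N. (c r3 r4 \<omega>)^2)"

lemma xP: "r < N \<Longrightarrow> r' < N \<Longrightarrow> {A0 + r, B0 + r'} \<in> pairs {1..n}"
  using A1 AB Bn by (auto simp: pairs_def)

lemma bx: "bnd (x r r')"
  unfolding x_def using bnd_X[OF xP] bnd_const by auto

lemma x01: "\<omega> \<in> space M \<Longrightarrow> 0 \<le> x r r' \<omega> \<and> x r r' \<omega> \<le> 1"
  unfolding x_def using X01[OF xP] by auto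

lemma Ex: "r < N \<Longrightarrow> r' < N \<Longrightarrow> p - \<eta> \<le> expectation (x r r')"
  unfolding x_def using Ep_lo[OF xP] by auto

lemmas bI = bnd_intros bx bY bW bZ

lemma bH: "bnd (H r)" unfolding H_def by (auto intro!: bI)
lemma bS: "bnd S" unfolding S_def by (auto intro!: bI bH)
lemma bg: "bnd (g r' r'')" unfolding g_def by (auto intro!: bI)
lemma bc: "bnd (c r' r'')" unfolding c_def by (auto intro!: bI)
lemma bd: "bnd (d r')" unfolding d_def by (auto intro!: bI)
lemma bd': "bnd (d' r)" unfolding d'_def by (auto intro!: bI)
lemma bc': "bnd (c' r1 r2)" unfolding c'_def by (auto intro!: bI)
lemma bQ: "bnd Q" unfolding Q_def by (auto intro!: bI bc)
lemma bT: "bnd (T r1 r2 r3 r4)"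
  unfolding T_def by (auto intro!: bI)

lemmas bJ = bI bH bS bg bc bd bd' bc' bQ bT

end

context core begin

lemma E_sum2: "(\<And>a b. bnd (F a b)) \<Longrightarrow>
  expectation (\<lambda>\<omega>. \<Sum>a\<in>A. \<Sum>b\<in>B. F a b \<omega>) = (\<Sum>a\<in>A. \<Sum>b\<in>B. expectation (F a b))"
  by (simp add: E_sum bnd_sum)

lemma E_sum4: "(\<And>a b c d. bnd (F a b c d)) \<Longrightarrow>
  expectation (\<lambda>\<omega>. \<Sum>a\<in>A. \<Sum>b\<in>B. \<Sum>c\<in>C. \<Sum>d\<in>D. F a b c d \<omega>)
   = (\<Sum>a\<in>A. \<Sum>b\<in>B. \<Sum>c\<in>C. \<Sum>d\<in>D. expectation (F a b c d))"
  by (simp add: E_sum bnd_sum)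

lemma L1: assumes w: "\<omega> \<in> space M" shows "(S \<omega>)^2 \<le> real N * (\<Sum>r<N. (H r \<omega>)^2)"
proof -
  have "\<bar>S \<omega>\<bar> \<le> (\<Sum>r<N. \<bar>H r \<omega>\<bar>)"
  proof -
    have "\<bar>S \<omega>\<bar> = \<bar>Z \<omega>\<bar> * \<bar>\<Sum>r<N. Y r \<omega> * H r \<omega>\<bar>" by (simp add: S_def abs_mult)
    also have "\<dots> \<le> 1 * \<bar>\<Sum>r<N. Y r \<omega> * H r \<omega>\<bar>"
      using Z01[OF w] by (intro mult_right_mono) auto
    also have "\<dots> \<le> (\<Sum>r<N. \<bar>Y r \<omega> * H r \<omega>\<bar>)" by (simp add: sum_abs)
    also have "\<dots> \<le> (\<Sum>r<N. \<bar>H r \<omega>\<bar>)"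
    proof (rule sum_mono)
      fix r assume "r \<in> {..<N}"
      then have "\<bar>Y r \<omega>\<bar> \<le> 1" using Y01[of r \<omega>] w by auto
      then show "\<bar>Y r \<omega> * H r \<omega>\<bar> \<le> \<bar>H r \<omega>\<bar>"
        by (simp add: abs_mult mult_left_le_one_le)
    qed
    finally show ?thesis .
  qed
  then have "(S \<omega>)^2 \<le> (\<Sum>r<N. \<bar>H r \<omega>\<bar>)^2"
    by (metis abs_ge_zero power2_abs power_mono)
  also have "\<dots> \<le> real N * (\<Sum>r<N. \<bar>H r \<omega>\<bar>^2)" using cs_sum[of "{..<N}" "\<lambda>r. \<bar>H r \<omega>\<bar>"] by simp
  finally show ?thesis by simp
qed

lemma L2: "(expectation S)^2 \<le> real N * expectation (\<lambda>\<omega>. \<Sum>r<N. (H r \<omega>)^2)"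
proof -
  have "(expectation S)^2 \<le> expectation (\<lambda>\<omega>. (S \<omega>)^2)" by (rule jensen[OF bS])
  also have "\<dots> \<le> expectation (\<lambda>\<omega>. real N * (\<Sum>r<N. (H r \<omega>)^2))"
    by (rule E_mono) (auto intro!: bJ L1)
  finally show ?thesis by (simp only: E_cmult)
qed

lemma L3: "(\<Sum>r<N. (H r \<omega>)^2) = (\<Sum>r'<N. \<Sum>r''<N. W r' \<omega> * W r'' \<omega> * g r' r'' \<omega>)"
proof -
  have "(\<Sum>r<N. (H r \<omega>)^2) = (\<Sum>r<N. \<Sum>r'<N. \<Sum>r''<N. ((x r r' \<omega> - p) * W r' \<omega>) * ((x r r'' \<omega> - p) * W r'' \<omega>))"
    unfolding H_def sq_sum ..
  also have "\<dots> = (\<Sum>r'<N. \<Sum>r''<N. \<Sum>r<N. ((x r r' \<omega> - p) * W r' \<omega>) * ((x r r'' \<omega> - p) * W r'' \<omega>))"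
    by (rule swap3)
  also have "\<dots> = (\<Sum>r'<N. \<Sum>r''<N. W r' \<omega> * W r'' \<omega> * g r' r'' \<omega>)"
    unfolding g_def sum_distrib_left by (intro sum.cong refl) (simp add: mult_ac)
  finally show ?thesis .
qed

lemma L4: assumes w: "\<omega> \<in> space M"
  shows "(\<Sum>r<N. (H r \<omega>)^2)^2 \<le> real N ^ 2 * (\<Sum>r'<N. \<Sum>r''<N. (g r' r'' \<omega>)^2)"
proof -
  have "\<bar>\<Sum>r'<N. \<Sum>r''<N. W r' \<omega> * W r'' \<omega> * g r' r'' \<omega>\<bar> \<le> (\<Sum>r'<N. \<Sum>r''<N. \<bar>g r' r'' \<omega>\<bar>)"
  proof -
    have "\<bar>\<Sum>r'<N. \<Sum>r''<N. W r' \<omega> * W r'' \<omega> * g r' r'' \<omega>\<bar> \<le> (\<Sum>r'<N. \<bar>\<Sum>r''<N. W r' \<omega> * W r'' \<omega> * g r' r'' \<omega>\<bar>)"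
      by (rule sum_abs)
    also have "\<dots> \<le> (\<Sum>r'<N. \<Sum>r''<N. \<bar>W r' \<omega> * W r'' \<omega> * g r' r'' \<omega>\<bar>)"
      by (intro sum_mono sum_abs)
    also have "\<dots> \<le> (\<Sum>r'<N. \<Sum>r''<N. \<bar>g r' r'' \<omega>\<bar>)"
    proof (intro sum_mono)
      fix r' r'' assume "r' \<in> {..<N}" "r'' \<in> {..<N}"
      then have "\<bar>W r' \<omega> * W r'' \<omega>\<bar> \<le> 1" using W01[of r' \<omega>] W01[of r'' \<omega>] w
        by (auto simp: abs_mult intro!: mult_le_one)
      then show "\<bar>W r' \<omega> * W r'' \<omega> * g r' r'' \<omega>\<bar> \<le> \<bar>g r' r'' \<omega>\<bar>"
        by (simp add: abs_mult mult_left_le_one_le)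
    qed
    finally show ?thesis .
  qed
  note A = this
  have "(\<Sum>r<N. (H r \<omega>)^2)^2 = \<bar>\<Sum>r'<N. \<Sum>r''<N. W r' \<omega> * W r'' \<omega> * g r' r'' \<omega>\<bar>^2"
    by (simp only: L3 power2_abs)
  also have "\<dots> \<le> (\<Sum>r'<N. \<Sum>r''<N. \<bar>g r' r'' \<omega>\<bar>)^2"
    by (rule power_mono[OF A abs_ge_zero])
  also have "\<dots> \<le> real (card {..<N}) ^ 2 * (\<Sum>r'<N. \<Sum>r''<N. \<bar>g r' r'' \<omega>\<bar>^2)"
    by (rule cs_sum2) simp
  also have "\<dots> = real N ^ 2 * (\<Sum>r'<N. \<Sum>r''<N. (g r' r'' \<omega>)^2)"
    by (simp only: power2_abs card_lessThan)
  finally show ?thesis .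
qed

lemma L5: "(expectation (\<lambda>\<omega>. \<Sum>r<N. (H r \<omega>)^2))^2 \<le> real N ^ 2 * expectation (\<lambda>\<omega>. \<Sum>r'<N. \<Sum>r''<N. (g r' r'' \<omega>)^2)"
proof -
  have "(expectation (\<lambda>\<omega>. \<Sum>r<N. (H r \<omega>)^2))^2 \<le> expectation (\<lambda>\<omega>. (\<Sum>r<N. (H r \<omega>)^2)^2)"
    by (rule jensen) (auto intro!: bJ)
  also have "\<dots> \<le> expectation (\<lambda>\<omega>. real N ^ 2 * (\<Sum>r'<N. \<Sum>r''<N. (g r' r'' \<omega>)^2))"
    by (rule E_mono) (auto intro!: bJ L4)
  finally show ?thesis by (simp only: E_cmult)
qed

lemma L6: "(expectation S)^4 \<le> real N ^ 4 * expectation (\<lambda>\<omega>. \<Sum>r'<N. \<Sum>r''<N. (g r' r'' \<omega>)^2)"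
proof -
  have "(expectation S)^4 = ((expectation S)^2)^2" by simp
  also have "\<dots> \<le> (real N * expectation (\<lambda>\<omega>. \<Sum>r<N. (H r \<omega>)^2))^2"
    by (rule power_mono[OF L2]) simp
  also have "\<dots> = real N ^ 2 * (expectation (\<lambda>\<omega>. \<Sum>r<N. (H r \<omega>)^2))^2"
    by (simp add: power_mult_distrib)
  also have "\<dots> \<le> real N ^ 2 * (real N ^ 2 * expectation (\<lambda>\<omega>. \<Sum>r'<N. \<Sum>r''<N. (g r' r'' \<omega>)^2))"
    by (rule mult_left_mono[OF L5]) simp
  finally show ?thesis by (simp add: power_add[symmetric] mult.assoc[symmetric])
qed

end

context core begin

lemma sum_centered: "(\<Sum>r<N. (a r - q) * (b r - q)) = (\<Sum>r<N. a r * b r) - q * (\<Sum>r<N. b r) - q * (\<Sum>r<N. a r) + real N * q^2"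
  for a b :: "nat \<Rightarrow> real" and q :: real
  by (simp add: algebra_simps sum.distrib sum_subtractf sum_distrib_left power2_eq_square)

lemma g_eq: "g r' r'' \<omega> = c r' r'' \<omega> - p * d r'' \<omega> - p * d r' \<omega> + real N * p^2"
  unfolding g_def c_def d_def by (rule sum_centered)

lemma three_sq: "(u + v + w)^2 \<le> 3 * (u^2 + v^2 + w^2)" for u v w :: real
proof -
  have "0 \<le> (u - v)^2 + (v - w)^2 + (u - w)^2" by simp
  then show ?thesis by (simp add: power2_eq_square algebra_simps)
qed

lemma L8: "(\<Sum>r'<N. \<Sum>r''<N. (g r' r'' \<omega>)^2) \<le> 3 * (\<Sum>r'<N. \<Sum>r''<N. (c r' r'' \<omega> - real N * p^2)^2)
     + 6 * real N * (\<Sum>r'<N. (d r' \<omega> - real N * p)^2)"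
proof -
  have pt: "(g r' r'' \<omega>)^2 \<le> 3 * (c r' r'' \<omega> - real N * p^2)^2 + 3 * (d r'' \<omega> - real N * p)^2 + 3 * (d r' \<omega> - real N * p)^2" for r' r''
  proof -
    define A where "A = c r' r'' \<omega> - real N * p^2"
    define B where "B = d r'' \<omega> - real N * p"
    define C where "C = d r' \<omega> - real N * p"
    have "g r' r'' \<omega> = A + (- p * B) + (- p * C)"
      unfolding g_eq A_def B_def C_def by (simp add: algebra_simps power2_eq_square)
    then have "(g r' r'' \<omega>)^2 \<le> 3 * (A^2 + (- p * B)^2 + (- p * C)^2)"
      using three_sq by metis
    also have "\<dots> \<le> 3 * (A^2 + B^2 + C^2)"
    proof -
      have pp: "p^2 \<le> 1" using p01 by (simp add: power_le_one)
      have "(- p * B)^2 \<le> B^2" using pp by (simp add: power_mult_distrib mult_left_le_one_le)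
      moreover have "(- p * C)^2 \<le> C^2" using pp by (simp add: power_mult_distrib mult_left_le_one_le)
      ultimately show ?thesis by simp
    qed
    finally show ?thesis unfolding A_def B_def C_def by simp
  qed
  have "(\<Sum>r'<N. \<Sum>r''<N. (g r' r'' \<omega>)^2) \<le> (\<Sum>r'<N. \<Sum>r''<N. 3 * (c r' r'' \<omega> - real N * p^2)^2 + 3 * (d r'' \<omega> - real N * p)^2 + 3 * (d r' \<omega> - real N * p)^2)"
    by (intro sum_mono pt)
  also have "\<dots> = 3 * (\<Sum>r'<N. \<Sum>r''<N. (c r' r'' \<omega> - real N * p^2)^2)
     + 6 * real N * (\<Sum>r'<N. (d r' \<omega> - real N * p)^2)"
  proof -
    have e1: "(\<Sum>r'<N. \<Sum>r''<N. (d r'' \<omega> - real N * p)^2) = real N * (\<Sum>r'<N. (d r' \<omega> - real N * p)^2)"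
      by simp
    have e2: "(\<Sum>r'<N. \<Sum>r''<N. (d r' \<omega> - real N * p)^2) = real N * (\<Sum>r'<N. (d r' \<omega> - real N * p)^2)"
      by (simp add: sum_distrib_left)
    have "(\<Sum>r'<N. \<Sum>r''<N. 3 * (c r' r'' \<omega> - real N * p^2)^2 + 3 * (d r'' \<omega> - real N * p)^2 + 3 * (d r' \<omega> - real N * p)^2)
      = 3 * (\<Sum>r'<N. \<Sum>r''<N. (c r' r'' \<omega> - real N * p^2)^2) + 3 * (\<Sum>r'<N. \<Sum>r''<N. (d r'' \<omega> - real N * p)^2)
        + 3 * (\<Sum>r'<N. \<Sum>r''<N. (d r' \<omega> - real N * p)^2)"
      by (simp only: sum.distrib sum_distrib_left)
    then show ?thesis unfolding e1 e2 by simp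
  qed
  finally show ?thesis .
qed

lemma T01: "\<omega> \<in> space M \<Longrightarrow> 0 \<le> T r1 r2 r3 r4 \<omega> \<and> T r1 r2 r3 r4 \<omega> \<le> 1"
  unfolding T_def using x01 by (auto intro!: mult_nonneg_nonneg mult_le_one)

lemma ET1: "expectation (T r1 r2 r3 r4) \<le> 1"
  by (rule E_le_const[OF bT]) (use T01 in auto)

lemma ET_ord:
  assumes "r1 < r2" "r3 < r4" "r2 < N" "r4 < N"
  shows "expectation (T r1 r2 r3 r4) \<le> p^4 + \<theta> + 16 * \<eta>"
proof -
  have "T r1 r2 r3 r4 = (\<lambda>\<omega>. X {A0+r1, B0+r3} \<omega> * X {A0+r1, B0+r4} \<omega> * X {A0+r2, B0+r3} \<omega> * X {A0+r2, B0+r4} \<omega>)"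
    using assms by (auto simp: T_def x_def mult.assoc)
  moreover have "expectation (\<lambda>\<omega>. X {A0+r1, B0+r3} \<omega> * X {A0+r1, B0+r4} \<omega> * X {A0+r2, B0+r3} \<omega> * X {A0+r2, B0+r4} \<omega>)
      \<le> p^4 + \<theta> + 16 * \<eta>"
    by (rule C4) (use assms A1 AB Bn in auto)
  ultimately show ?thesis by simp
qed

lemma T_sym1: "T r2 r1 r3 r4 = T r1 r2 r3 r4" unfolding T_def by (auto simp: mult_ac)
lemma T_sym2: "T r1 r2 r4 r3 = T r1 r2 r3 r4" unfolding T_def by (auto simp: mult_ac)

lemma ET_off:
  assumes "r1 \<noteq> r2" "r3 \<noteq> r4" "r1 < N" "r2 < N" "r3 < N" "r4 < N"
  shows "expectation (T r1 r2 r3 r4) \<le> p^4 + \<theta> + 16 * \<eta>"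
proof -
  have a: "expectation (T a b c d) \<le> p^4 + \<theta> + 16 * \<eta>" if "a < b" "c \<noteq> d" "b < N" "c < N" "d < N" for a b c d
  proof (cases "c < d")
    case True then show ?thesis using that ET_ord by auto
  next
    case False then have "d < c" using that by auto
    then show ?thesis using that ET_ord[of a b d c] T_sym2[of a b c d] by auto
  qed
  show ?thesis
  proof (cases "r1 < r2")
    case True then show ?thesis using a assms by auto
  next
    case False then have "r2 < r1" using assms by auto
    then show ?thesis using a[of r2 r1 r3 r4] assms T_sym1[of r1 r2 r3 r4] by auto
  qed
qed

lemma B_nonneg: "0 \<le> p^4 + \<theta> + 16 * \<eta>"
  using p01 theta eta by auto

lemma ET_bound:
  assumes "r1 < N" "r2 < N" "r3 < N" "r4 < N"
  shows "expectation (T r1 r2 r3 r4) \<le> (p^4 + \<theta> + 16 * \<eta>) + (if r1 = r2 then 1 else 0) + (if r3 = r4 then 1 else 0)"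
proof (cases "r1 = r2 \<or> r3 = r4")
  case True then show ?thesis using ET1[of r1 r2 r3 r4] B_nonneg by auto
next
  case False then show ?thesis using ET_off assms by auto
qed

lemma Q_T: "Q = (\<lambda>\<omega>. \<Sum>r3<N. \<Sum>r4<N. \<Sum>r1<N. \<Sum>r2<N. T r1 r2 r3 r4 \<omega>)"
  by (rule ext) (simp add: Q_def c_def sq_sum T_def)

lemma EQ: "expectation Q \<le> real N ^ 4 * (p^4 + \<theta> + 16 * \<eta>) + 2 * real N ^ 3"
proof -
  define B where "B = p^4 + \<theta> + 16 * \<eta>"
  have "expectation Q = (\<Sum>r3<N. \<Sum>r4<N. \<Sum>r1<N. \<Sum>r2<N. expectation (T r1 r2 r3 r4))"
    unfolding Q_T by (rule E_sum4) (rule bT)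
  also have "\<dots> \<le> (\<Sum>r3<N. \<Sum>r4<N. \<Sum>r1<N. \<Sum>r2<N. B + (if r1 = r2 then 1 else 0) + (if r3 = r4 then 1 else 0))"
    unfolding B_def by (intro sum_mono ET_bound) auto
  also have "\<dots> = real N ^ 4 * B + 2 * real N ^ 3"
  proof -
    have dl: "(\<Sum>a<N. \<Sum>b<N. if a = b then 1 else 0) = real N"
    proof -
      have "(\<Sum>a<N. \<Sum>b<N. if a = b then (1::real) else 0) = (\<Sum>a<N. 1)"
        by (intro sum.cong refl) auto
      then show ?thesis by simp
    qed
    have i1: "(\<Sum>r1<N. \<Sum>r2<N. B + (if r1 = r2 then 1 else 0) + (if r3 = r4 then 1 else 0))
       = real N ^ 2 * B + real N + real N ^ 2 * (if r3 = r4 then 1 else 0)" for r3 r4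
      by (simp only: sum.distrib dl) (simp add: power2_eq_square)
    have "(\<Sum>r3<N. \<Sum>r4<N. \<Sum>r1<N. \<Sum>r2<N. B + (if r1 = r2 then 1 else 0) + (if r3 = r4 then 1 else 0))
        = (\<Sum>r3<N. \<Sum>r4<N. real N ^ 2 * B + real N + real N ^ 2 * (if r3 = r4 then 1 else 0))"
      by (simp only: i1)
    also have "\<dots> = real N ^ 4 * B + real N ^ 3 + real N ^ 2 * real N"
      by (simp only: sum.distrib dl sum_distrib_left[symmetric]) (simp add: power_def)
    finally show ?thesis by (simp add: power_def)
  qed
  finally show ?thesis unfolding B_def .
qed

lemma sqlow:
  fixes a :: real
  assumes "real N * (p - \<eta>) \<le> a" "0 \<le> a"
  shows "real N ^ 2 * (p^2 - 2 * \<eta>) \<le> a^2"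
proof (cases "\<eta> \<le> p")
  case True
  then have "0 \<le> real N * (p - \<eta>)" by simp
  then have "(real N * (p - \<eta>))^2 \<le> a^2" using assms by (intro power_mono) auto
  moreover have "real N ^ 2 * (p^2 - 2 * \<eta>) \<le> (real N * (p - \<eta>))^2"
  proof -
    have "p^2 - 2 * \<eta> \<le> (p - \<eta>)^2"
    proof -
      have "\<eta> * p \<le> \<eta>" using p01 eta by (simp add: mult_left_le)
      moreover have "(p-\<eta>)^2 = p^2 - 2*(\<eta>*p) + \<eta>*\<eta>" by (simp add: power2_eq_square algebra_simps)
      moreover have "0 \<le> \<eta>*\<eta>" by simp
      ultimately show ?thesis by linarith
    qed
    then have "real N ^ 2 * (p^2 - 2 * \<eta>) \<le> real N ^ 2 * (p - \<eta>)^2" by (rule mult_left_mono) simp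
    then show ?thesis by (simp add: power_mult_distrib)
  qed
  ultimately show ?thesis by linarith
next
  case False
  then have "p^2 - 2 * \<eta> \<le> 0" using p01
    by (smt (verit) mult_left_le_one_le power2_eq_square)
  then have "real N ^ 2 * (p^2 - 2 * \<eta>) \<le> 0" by (simp add: mult_nonneg_nonpos)
  then show ?thesis by (smt (verit) zero_le_power2)
qed

lemma Ed'_each: "r < N \<Longrightarrow> real N * (p - \<eta>) \<le> expectation (d' r)"
proof -
  assume r: "r < N"
  have "expectation (d' r) = (\<Sum>r'<N. expectation (x r r'))"
    unfolding d'_def by (rule E_sum) (rule bx)
  also have "\<dots> \<ge> (\<Sum>r'<N. p - \<eta>)" using Ex r by (intro sum_mono) auto
  finally show ?thesis by simp
qed

lemma d'_nonneg: "\<omega> \<in> space M \<Longrightarrow> 0 \<le> d' r \<omega>"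
  unfolding d'_def using x01 by (auto intro!: sum_nonneg)

lemma Ed': "real N ^ 3 * (p^2 - 2 * \<eta>) \<le> expectation (\<lambda>\<omega>. \<Sum>r<N. (d' r \<omega>)^2)"
proof -
  have "expectation (\<lambda>\<omega>. \<Sum>r<N. (d' r \<omega>)^2) = (\<Sum>r<N. expectation (\<lambda>\<omega>. (d' r \<omega>)^2))"
    by (rule E_sum) (auto intro!: bJ)
  also have "\<dots> \<ge> (\<Sum>r<N. real N ^ 2 * (p^2 - 2 * \<eta>))"
  proof (rule sum_mono)
    fix r assume r: "r \<in> {..<N}"
    have "real N ^ 2 * (p^2 - 2 * \<eta>) \<le> (expectation (d' r))^2"
      by (rule sqlow[OF Ed'_each]) (use r d'_nonneg in \<open>auto intro!: E_ge_const bd'\<close>)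
    also have "\<dots> \<le> expectation (\<lambda>\<omega>. (d' r \<omega>)^2)" by (rule jensen[OF bd'])
    finally show "real N ^ 2 * (p^2 - 2 * \<eta>) \<le> expectation (\<lambda>\<omega>. (d' r \<omega>)^2)" .
  qed
  finally show ?thesis by (simp add: power_def mult_ac)
qed

lemma sumc_d': "(\<Sum>r'<N. \<Sum>r''<N. c r' r'' \<omega>) = (\<Sum>r<N. (d' r \<omega>)^2)"
proof -
  have "(\<Sum>r'<N. \<Sum>r''<N. c r' r'' \<omega>) = (\<Sum>r'<N. \<Sum>r''<N. \<Sum>r<N. x r r' \<omega> * x r r'' \<omega>)"
    unfolding c_def ..
  also have "\<dots> = (\<Sum>r<N. \<Sum>r'<N. \<Sum>r''<N. x r r' \<omega> * x r r'' \<omega>)"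
    by (rule swap3[symmetric])
  finally show ?thesis unfolding d'_def sq_sum .
qed

lemma L9: "expectation (\<lambda>\<omega>. \<Sum>r'<N. \<Sum>r''<N. (c r' r'' \<omega> - real N * p^2)^2) \<le> real N ^ 4 * (\<theta> + 20 * \<eta>) + 2 * real N ^ 3"
proof -
  have pt: "(\<lambda>\<omega>. \<Sum>r'<N. \<Sum>r''<N. (c r' r'' \<omega> - real N * p^2)^2)
     = (\<lambda>\<omega>. Q \<omega> - 2 * real N * p^2 * (\<Sum>r<N. (d' r \<omega>)^2) + real N ^ 4 * p^4)"
  proof
    fix \<omega>
    have "(\<Sum>r'<N. \<Sum>r''<N. (c r' r'' \<omega> - real N * p^2)^2)
        = (\<Sum>r'<N. \<Sum>r''<N. (c r' r'' \<omega>)^2 - 2 * real N * p^2 * c r' r'' \<omega> + (real N * p^2)^2)"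
      by (intro sum.cong refl) (simp add: power2_diff)
    also have "\<dots> = Q \<omega> - 2 * real N * p^2 * (\<Sum>r'<N. \<Sum>r''<N. c r' r'' \<omega>) + real N ^ 2 * (real N * p^2)^2"
      by (simp add: Q_def sum.distrib sum_subtractf sum_distrib_left power2_eq_square)
    finally show "(\<Sum>r'<N. \<Sum>r''<N. (c r' r'' \<omega> - real N * p^2)^2) = Q \<omega> - 2 * real N * p^2 * (\<Sum>r<N. (d' r \<omega>)^2) + real N ^ 4 * p^4"
      by (simp add: sumc_d' power_mult_distrib power_def)
  qed
  have "expectation (\<lambda>\<omega>. Q \<omega> - 2 * real N * p^2 * (\<Sum>r<N. (d' r \<omega>)^2) + real N ^ 4 * p^4)
     = expectation Q - 2 * real N * p^2 * expectation (\<lambda>\<omega>. \<Sum>r<N. (d' r \<omega>)^2) + real N ^ 4 * p^4"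
    by (simp add: E_add E_diff E_cmult bJ prob_space)
  also have "\<dots> \<le> (real N ^ 4 * (p^4 + \<theta> + 16 * \<eta>) + 2 * real N ^ 3) - 2 * real N * p^2 * (real N ^ 3 * (p^2 - 2 * \<eta>)) + real N ^ 4 * p^4"
    using EQ Ed' by (intro add_mono diff_mono mult_left_mono) (auto simp: p01)
  also have "\<dots> = real N ^ 4 * (\<theta> + 16 * \<eta> + 4 * p^2 * \<eta>) + 2 * real N ^ 3"
    by (simp add: algebra_simps power_def)
  also have "\<dots> \<le> real N ^ 4 * (\<theta> + 20 * \<eta>) + 2 * real N ^ 3"
  proof -
    have "p^2 \<le> 1" using p01 by (simp add: power_le_one)
    then have "p^2 * \<eta> \<le> \<eta>" using eta by (simp add: mult_left_le_one_le)
    then have "\<theta> + 16 * \<eta> + 4 * p^2 * \<eta> \<le> \<theta> + 20 * \<eta>" by linarith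
    then have "real N ^ 4 * (\<theta> + 16 * \<eta> + 4 * p^2 * \<eta>) \<le> real N ^ 4 * (\<theta> + 20 * \<eta>)"
      by (rule mult_left_mono) simp
    then show ?thesis by linarith
  qed
  finally show ?thesis unfolding pt .
qed

lemma sumd_c': "(\<Sum>r'<N. (d r' \<omega>)^2) = (\<Sum>r1<N. \<Sum>r2<N. c' r1 r2 \<omega>)"
proof -
  have "(\<Sum>r'<N. (d r' \<omega>)^2) = (\<Sum>r'<N. \<Sum>r1<N. \<Sum>r2<N. x r1 r' \<omega> * x r2 r' \<omega>)"
    unfolding d_def sq_sum ..
  also have "\<dots> = (\<Sum>r1<N. \<Sum>r2<N. \<Sum>r'<N. x r1 r' \<omega> * x r2 r' \<omega>)"
    by (rule swap3)
  finally show ?thesis unfolding c'_def .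
qed

lemma sumc'_Q: "(\<Sum>r1<N. \<Sum>r2<N. (c' r1 r2 \<omega>)^2) = Q \<omega>"
proof -
  have "(\<Sum>r1<N. \<Sum>r2<N. (c' r1 r2 \<omega>)^2) = (\<Sum>r1<N. \<Sum>r2<N. \<Sum>r3<N. \<Sum>r4<N. T r1 r2 r3 r4 \<omega>)"
    unfolding c'_def sq_sum T_def by (intro sum.cong refl) (simp add: mult_ac)
  also have "\<dots> = (\<Sum>r3<N. \<Sum>r4<N. \<Sum>r1<N. \<Sum>r2<N. T r1 r2 r3 r4 \<omega>)"
    by (rule swap4)
  finally show ?thesis unfolding Q_T by simp
qed

definition eps where "eps = \<theta> + 16 * \<eta> + 2 / real N"

lemma eps_nonneg: "0 \<le> eps" unfolding eps_def using theta eta by auto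

lemma EQ': "expectation Q \<le> real N ^ 4 * (p^4 + eps)"
proof -
  have "real N ^ 4 * (2 / real N) = 2 * real N ^ 3" using N1 by (simp add: power_def)
  then show ?thesis using EQ unfolding eps_def by (simp add: algebra_simps)
qed

lemma Ed2: "expectation (\<lambda>\<omega>. \<Sum>r'<N. (d r' \<omega>)^2) \<le> real N ^ 3 * (p^2 + sqrt eps)"
proof -
  let ?D = "\<lambda>\<omega>. \<Sum>r'<N. (d r' \<omega>)^2"
  have pt: "(?D \<omega>)^2 \<le> real N ^ 2 * Q \<omega>" for \<omega>
  proof -
    have "(?D \<omega>)^2 = (\<Sum>r1<N. \<Sum>r2<N. c' r1 r2 \<omega>)^2" unfolding sumd_c' ..
    also have "\<dots> \<le> real (card {..<N}) ^ 2 * (\<Sum>r1<N. \<Sum>r2<N. (c' r1 r2 \<omega>)^2)"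
      by (rule cs_sum2) simp
    finally show ?thesis unfolding sumc'_Q by simp
  qed
  have "(expectation ?D)^2 \<le> expectation (\<lambda>\<omega>. (?D \<omega>)^2)" by (rule jensen) (auto intro!: bJ)
  also have "\<dots> \<le> expectation (\<lambda>\<omega>. real N ^ 2 * Q \<omega>)" by (rule E_mono) (auto intro!: bJ pt)
  also have "\<dots> = real N ^ 2 * expectation Q" by (rule E_cmult)
  also have "\<dots> \<le> real N ^ 2 * (real N ^ 4 * (p^4 + eps))" by (rule mult_left_mono[OF EQ']) simp
  also have "\<dots> = (real N ^ 3)^2 * (p^4 + eps)" by (simp add: power_def)
  finally have "expectation ?D \<le> sqrt ((real N ^ 3)^2 * (p^4 + eps))" by (rule real_le_rsqrt)
  also have "\<dots> = real N ^ 3 * sqrt (p^4 + eps)" by (simp only: real_sqrt_mult real_sqrt_abs power_abs abs_of_nat)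
  also have "\<dots> \<le> real N ^ 3 * (p^2 + sqrt eps)"
  proof -
    have "sqrt (p^4 + eps) \<le> sqrt (p^4) + sqrt eps" by (rule sqrt_add_le_add_sqrt) (auto simp: eps_nonneg)
    also have "sqrt (p^4) = p^2"
      by (metis abs_of_nonneg p01(1) real_sqrt_abs zero_le_power2 power_mult numeral_times_numeral semiring_norm(11) semiring_norm(13) power2_eq_square)
    finally show ?thesis by (rule mult_left_mono) simp
  qed
  finally show ?thesis .
qed

lemma L10: "expectation (\<lambda>\<omega>. \<Sum>r'<N. (d r' \<omega> - real N * p)^2) \<le> real N ^ 3 * (sqrt eps + 2 * \<eta>)"
proof -
  have pt: "(\<lambda>\<omega>. \<Sum>r'<N. (d r' \<omega> - real N * p)^2)
     = (\<lambda>\<omega>. (\<Sum>r'<N. (d r' \<omega>)^2) - 2 * real N * p * (\<Sum>r'<N. d r' \<omega>) + real N ^ 3 * p^2)"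
  proof
    fix \<omega>
    have "(\<Sum>r'<N. (d r' \<omega> - real N * p)^2) = (\<Sum>r'<N. (d r' \<omega>)^2 - 2 * real N * p * d r' \<omega> + (real N * p)^2)"
      by (intro sum.cong refl) (simp add: power2_diff)
    also have "\<dots> = (\<Sum>r'<N. (d r' \<omega>)^2) - 2 * real N * p * (\<Sum>r'<N. d r' \<omega>) + real N ^ 3 * p^2"
      by (simp add: sum.distrib sum_subtractf sum_distrib_left power2_eq_square power_def)
    finally show "(\<Sum>r'<N. (d r' \<omega> - real N * p)^2) = (\<Sum>r'<N. (d r' \<omega>)^2) - 2 * real N * p * (\<Sum>r'<N. d r' \<omega>) + real N ^ 3 * p^2" .
  qed
  have Ed: "real N ^ 2 * (p - \<eta>) \<le> expectation (\<lambda>\<omega>. \<Sum>r'<N. d r' \<omega>)"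
  proof -
    have "expectation (\<lambda>\<omega>. \<Sum>r'<N. d r' \<omega>) = (\<Sum>r'<N. \<Sum>r<N. expectation (x r r'))"
      unfolding d_def by (rule E_sum2) (rule bx)
    also have "\<dots> \<ge> (\<Sum>r'<N. \<Sum>r<N. p - \<eta>)" using Ex by (intro sum_mono) auto
    finally show ?thesis by (simp add: power2_eq_square)
  qed
  have "expectation (\<lambda>\<omega>. (\<Sum>r'<N. (d r' \<omega>)^2) - 2 * real N * p * (\<Sum>r'<N. d r' \<omega>) + real N ^ 3 * p^2)
     = expectation (\<lambda>\<omega>. \<Sum>r'<N. (d r' \<omega>)^2) - 2 * real N * p * expectation (\<lambda>\<omega>. \<Sum>r'<N. d r' \<omega>) + real N ^ 3 * p^2"
    by (simp add: E_add E_diff E_cmult bJ prob_space)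
  also have "\<dots> \<le> real N ^ 3 * (p^2 + sqrt eps) - 2 * real N * p * (real N ^ 2 * (p - \<eta>)) + real N ^ 3 * p^2"
    using Ed2 Ed by (intro add_mono diff_mono mult_left_mono) (auto simp: p01)
  also have "\<dots> = real N ^ 3 * (sqrt eps + 2 * p * \<eta>)"
    by (simp add: algebra_simps power_def)
  also have "\<dots> \<le> real N ^ 3 * (sqrt eps + 2 * \<eta>)"
    using p01 eta by (intro mult_left_mono add_left_mono) (auto simp: mult_left_le_one_le)
  finally show ?thesis unfolding pt .
qed

lemma core: "(expectation S)^4 \<le> real N ^ 8 * (3 * \<theta> + 72 * \<eta> + 6 / real N + 6 * sqrt eps)"
proof -
  have "expectation (\<lambda>\<omega>. \<Sum>r'<N. \<Sum>r''<N. (g r' r'' \<omega>)^2)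
     \<le> expectation (\<lambda>\<omega>. 3 * (\<Sum>r'<N. \<Sum>r''<N. (c r' r'' \<omega> - real N * p^2)^2)
     + 6 * real N * (\<Sum>r'<N. (d r' \<omega> - real N * p)^2))"
    by (rule E_mono) (auto intro!: bJ L8)
  also have "\<dots> = 3 * expectation (\<lambda>\<omega>. \<Sum>r'<N. \<Sum>r''<N. (c r' r'' \<omega> - real N * p^2)^2)
     + 6 * real N * expectation (\<lambda>\<omega>. \<Sum>r'<N. (d r' \<omega> - real N * p)^2)"
    by (simp add: E_add E_cmult bJ)
  also have "\<dots> \<le> 3 * (real N ^ 4 * (\<theta> + 20 * \<eta>) + 2 * real N ^ 3) + 6 * real N * (real N ^ 3 * (sqrt eps + 2 * \<eta>))"
    using L9 L10 by (intro add_mono mult_left_mono) auto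
  also have "\<dots> = real N ^ 4 * (3 * \<theta> + 72 * \<eta> + 6 / real N + 6 * sqrt eps)"
    using N1 by (simp add: algebra_simps power_def)
  finally have G: "expectation (\<lambda>\<omega>. \<Sum>r'<N. \<Sum>r''<N. (g r' r'' \<omega>)^2) \<le> real N ^ 4 * (3 * \<theta> + 72 * \<eta> + 6 / real N + 6 * sqrt eps)" .
  have "(expectation S)^4 \<le> real N ^ 4 * expectation (\<lambda>\<omega>. \<Sum>r'<N. \<Sum>r''<N. (g r' r'' \<omega>)^2)" by (rule L6)
  also have "\<dots> \<le> real N ^ 4 * (real N ^ 4 * (3 * \<theta> + 72 * \<eta> + 6 / real N + 6 * sqrt eps))"
    by (rule mult_left_mono[OF G]) simp
  finally show ?thesis by (simp add: power_add[symmetric] mult.assoc[symmetric])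
qed

end

context arr begin

definition rk :: "nat set \<Rightarrow> nat \<Rightarrow> nat" where "rk V v = card {w\<in>V. w < v} + 1"

lemma rk_mono: assumes "finite V" "v \<in> V" "w \<in> V" "v < w" shows "rk V v < rk V w"
proof -
  have "{u\<in>V. u < v} \<subset> {u\<in>V. u < w}" using assms by auto
  then have "card {u\<in>V. u < v} < card {u\<in>V. u < w}" using assms by (intro psubset_card_mono) auto
  then show ?thesis unfolding rk_def by simp
qed

lemma rk_bounds: assumes "finite V" "v \<in> V" shows "1 \<le> rk V v" "rk V v \<le> card V"
proof -
  have "{w\<in>V. w < v} \<subseteq> V - {v}" by auto
  then have "card {w\<in>V. w < v} \<le> card (V - {v})" using assms by (intro card_mono) auto
  also have "\<dots> = card V - 1" using assms by simp
  finally have "card {w\<in>V. w < v} \<le> card V - 1" .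
  moreover have "card V \<ge> 1" using assms by (metis One_nat_def Suc_leI card_gt_0_iff empty_iff)
  ultimately show "rk V v \<le> card V" unfolding rk_def by linarith
  show "1 \<le> rk V v" unfolding rk_def by simp
qed

lemma pairs_finite: "finite (pairs {1..n})"
proof -
  have "pairs {1..n} \<subseteq> Pow {1..n}" unfolding pairs_def by auto
  then show ?thesis by (rule finite_subset) simp
qed

lemma X_prod01: "(\<And>s. s \<in> I \<Longrightarrow> \<phi> s \<in> pairs {1..n}) \<Longrightarrow> \<omega> \<in> space M \<Longrightarrow>
   0 \<le> (\<Prod>s\<in>I. X (\<phi> s) \<omega>) \<and> (\<Prod>s\<in>I. X (\<phi> s) \<omega>) \<le> 1"
  using X01 by (auto intro!: prod_nonneg prod_le_1)

lemma X_prod_bnd: "(\<And>s. s \<in> I \<Longrightarrow> \<phi> s \<in> pairs {1..n}) \<Longrightarrow> bnd (\<lambda>\<omega>. \<Prod>s\<in>I. X (\<phi> s) \<omega>)"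
  by (intro bnd_prod bnd_X) auto

lemma step:
  assumes G: "G \<subseteq> pairs {1..n}" and e: "e \<in> G" and Nn: "card (\<Union>G) + 1 \<le> n"
    and N_def: "N = n div (card (\<Union>G) + 1)"
  shows "\<exists>s. \<bar>expectation (\<lambda>\<omega>. \<Prod>s\<in>G. X s \<omega>) - p * expectation (\<lambda>\<omega>. \<Prod>s\<in>G-{e}. X s \<omega>)\<bar> \<le> 2 * \<eta> + \<bar>s\<bar>
     \<and> s^4 \<le> 3 * \<theta> + 72 * \<eta> + 6 / real N + 6 * sqrt (\<theta> + 16 * \<eta> + 2 / real N)"
proof -
  define V where "V = \<Union>G"
  have fG: "finite G" using G pairs_finite finite_subset by blast
  have VS: "V \<subseteq> {1..n}" using G unfolding V_def pairs_def by auto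
  have fV: "finite V" using VS finite_subset by blast
  have eP: "e \<in> pairs {1..n}" using G e by auto
  obtain a b where ab: "a < b" "e = {a,b}" using pair_ex[OF eP] by blast
  have aV: "a \<in> V" and bV: "b \<in> V" using e ab unfolding V_def by auto
  have cV: "2 \<le> card V"
  proof -
    have "card {a,b} \<le> card V" using aV bV fV by (intro card_mono) auto
    then show ?thesis using ab by simp
  qed
  have N1: "1 \<le> N" unfolding N_def using Nn by (subst less_eq_div_iff_mult_less_eq) auto
  have NV: "N * (card V + 1) \<le> n" unfolding N_def V_def by (rule div_times_less_eq_dividend)
  define off where "off r r' v = (if v = a then r else if v = b then r' else (0::nat))" for r r' v
  define \<sigma> where "\<sigma> r r' v = N * rk V v + off r r' v" for r r' v
  have offN: "r < N \<Longrightarrow> r' < N \<Longrightarrow> off r r' v < N" for r r' v unfolding off_def using N1 by auto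
  have sm: "strict_mono_on V (\<sigma> r r')" if "r < N" "r' < N" for r r'
  proof (rule strict_mono_onI)
    fix v w assume vw: "v \<in> V" "w \<in> V" "v < w"
    have "rk V v + 1 \<le> rk V w" using rk_mono[OF fV vw] by simp
    then have "N * (rk V v + 1) \<le> N * rk V w" by (rule mult_le_mono2)
    then show "\<sigma> r r' v < \<sigma> r r' w" unfolding \<sigma>_def using offN[OF that, of v] by (simp add: algebra_simps)
  qed
  have rng: "\<sigma> r r' ` V \<subseteq> {1..n}" if "r < N" "r' < N" for r r'
  proof
    fix y assume "y \<in> \<sigma> r r' ` V"
    then obtain v where v: "v \<in> V" "y = \<sigma> r r' v" by auto
    have "1 \<le> rk V v" "rk V v \<le> card V" using rk_bounds[OF fV v(1)] by auto
    then have h1: "N \<le> N * rk V v" and h2: "N * rk V v \<le> N * card V" by auto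
    have h3: "off r r' v < N" using offN that by auto
    have h4: "y = N * rk V v + off r r' v" using v unfolding \<sigma>_def by simp
    have h5: "N * card V + N \<le> n" using NV by (simp add: algebra_simps)
    show "y \<in> {1..n}" unfolding atLeastAtMost_iff using h1 h2 h3 h4 h5 N1 by linarith
  qed
  define A0 where "A0 = N * rk V a"
  define B0 where "B0 = N * rk V b"
  have \<sigma>e: "\<sigma> r r' ` e = {A0 + r, B0 + r'}" for r r'
    using ab unfolding \<sigma>_def A0_def B0_def off_def by auto
  define Ga where "Ga = {s\<in>G. a \<in> s \<and> b \<notin> s}"
  define Gb where "Gb = {s\<in>G. b \<in> s \<and> a \<notin> s}"
  define Gz where "Gz = {s\<in>G. a \<notin> s \<and> b \<notin> s}"
  have both: "s = e" if "s \<in> G" "a \<in> s" "b \<in> s" for s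
  proof -
    have cs: "card s = 2" using that G unfolding pairs_def by auto
    then have "finite s" by (metis card.infinite zero_neq_numeral)
    moreover have "{a,b} \<subseteq> s" using that by auto
    moreover have "card {a,b} = 2" using ab by auto
    ultimately have "{a,b} = s" using cs by (intro card_subset_eq) auto
    then show ?thesis using ab by simp
  qed
  have Gdec: "G - {e} = Ga \<union> Gb \<union> Gz" unfolding Ga_def Gb_def Gz_def using both ab by auto
  have fin: "finite Ga" "finite Gb" "finite Gz" using fG unfolding Ga_def Gb_def Gz_def by auto
  have disj: "Ga \<inter> Gb = {}" "(Ga \<union> Gb) \<inter> Gz = {}" unfolding Ga_def Gb_def Gz_def by auto
  define Y where "Y = (\<lambda>r \<omega>. \<Prod>s\<in>Ga. X (\<sigma> r 0 ` s) \<omega>)"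
  define W where "W = (\<lambda>r' \<omega>. \<Prod>s\<in>Gb. X (\<sigma> 0 r' ` s) \<omega>)"
  define Z where "Z = (\<lambda>\<omega>. \<Prod>s\<in>Gz. X (\<sigma> 0 0 ` s) \<omega>)"
  have agA: "\<sigma> r r' ` s = \<sigma> r 0 ` s" if "s \<in> Ga" for r r' s
    using that ab unfolding Ga_def \<sigma>_def off_def by (intro image_cong) auto
  have agB: "\<sigma> r r' ` s = \<sigma> 0 r' ` s" if "s \<in> Gb" for r r' s
    using that ab unfolding Gb_def \<sigma>_def off_def by (intro image_cong) auto
  have agZ: "\<sigma> r r' ` s = \<sigma> 0 0 ` s" if "s \<in> Gz" for r r' s
    using that ab unfolding Gz_def \<sigma>_def off_def by (intro image_cong) auto
  have prodG': "(\<Prod>s\<in>G-{e}. X (\<sigma> r r' ` s) \<omega>) = Y r \<omega> * W r' \<omega> * Z \<omega>" for r r' \<omega>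
  proof -
    have "(\<Prod>s\<in>G-{e}. X (\<sigma> r r' ` s) \<omega>) = (\<Prod>s\<in>Ga. X (\<sigma> r r' ` s) \<omega>) * (\<Prod>s\<in>Gb. X (\<sigma> r r' ` s) \<omega>) * (\<Prod>s\<in>Gz. X (\<sigma> r r' ` s) \<omega>)"
    proof -
      have "(\<Prod>s\<in>G-{e}. X (\<sigma> r r' ` s) \<omega>) = (\<Prod>s\<in>Ga \<union> Gb \<union> Gz. X (\<sigma> r r' ` s) \<omega>)"
        by (simp only: Gdec)
      also have "\<dots> = (\<Prod>s\<in>Ga \<union> Gb. X (\<sigma> r r' ` s) \<omega>) * (\<Prod>s\<in>Gz. X (\<sigma> r r' ` s) \<omega>)"
        by (rule prod.union_disjoint) (use fin disj in auto)
      also have "(\<Prod>s\<in>Ga \<union> Gb. X (\<sigma> r r' ` s) \<omega>) = (\<Prod>s\<in>Ga. X (\<sigma> r r' ` s) \<omega>) * (\<Prod>s\<in>Gb. X (\<sigma> r r' ` s) \<omega>)"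
        by (rule prod.union_disjoint) (use fin disj in auto)
      finally show ?thesis .
    qed
    also have "\<dots> = Y r \<omega> * W r' \<omega> * Z \<omega>"
    proof -
      have "(\<Prod>s\<in>Ga. X (\<sigma> r r' ` s) \<omega>) = Y r \<omega>" unfolding Y_def by (rule prod.cong[OF refl]) (metis agA)
      moreover have "(\<Prod>s\<in>Gb. X (\<sigma> r r' ` s) \<omega>) = W r' \<omega>" unfolding W_def by (rule prod.cong[OF refl]) (metis agB)
      moreover have "(\<Prod>s\<in>Gz. X (\<sigma> r r' ` s) \<omega>) = Z \<omega>" unfolding Z_def by (rule prod.cong[OF refl]) (metis agZ)
      ultimately show ?thesis by simp
    qed
    finally show ?thesis .
  qed
  have prodG: "(\<Prod>s\<in>G. X (\<sigma> r r' ` s) \<omega>) = X {A0 + r, B0 + r'} \<omega> * (Y r \<omega> * W r' \<omega> * Z \<omega>)" for r r' \<omega>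
  proof -
    have "(\<Prod>s\<in>G. X (\<sigma> r r' ` s) \<omega>) = X (\<sigma> r r' ` e) \<omega> * (\<Prod>s\<in>G-{e}. X (\<sigma> r r' ` s) \<omega>)"
      by (rule prod.remove[OF fG e])
    then show ?thesis unfolding prodG' \<sigma>e .
  qed
  have GV: "G \<subseteq> pairs V" using G unfolding V_def pairs_def by auto
  have \<sigma>P: "\<sigma> r r' ` s \<in> pairs {1..n}" if "s \<in> G" "r < N" "r' < N" for s r r'
    using GV that by (intro pair_image[OF _ strict_mono_on_imp_inj_on[OF sm[OF that(2,3)]] rng[OF that(2,3)]]) auto
  have N0: "0 < N" using N1 by simp
  have tr1: "\<bar>expectation (\<lambda>\<omega>. \<Prod>s\<in>G. X s \<omega>) - expectation (\<lambda>\<omega>. \<Prod>s\<in>G. X (\<sigma> r r' ` s) \<omega>)\<bar> \<le> \<eta>"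
    if "r < N" "r' < N" for r r'
    by (rule transfer[OF VS sm[OF that] rng[OF that] GV cV])
  have tr2: "\<bar>expectation (\<lambda>\<omega>. \<Prod>s\<in>G-{e}. X s \<omega>) - expectation (\<lambda>\<omega>. \<Prod>s\<in>G-{e}. X (\<sigma> r r' ` s) \<omega>)\<bar> \<le> \<eta>"
    if "r < N" "r' < N" for r r'
    by (rule transfer[OF VS sm[OF that] rng[OF that] _ cV]) (use GV in auto)

  have GaG: "Ga \<subseteq> G" "Gb \<subseteq> G" "Gz \<subseteq> G" unfolding Ga_def Gb_def Gz_def by auto
  have bY: "bnd (Y r)" if "r < N" for r
    unfolding Y_def by (rule X_prod_bnd) (use \<sigma>P that N0 GaG in auto)
  have bW: "bnd (W r)" if "r < N" for r
    unfolding W_def by (rule X_prod_bnd) (use \<sigma>P that N0 GaG in auto)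
  have bZ: "bnd Z"
    unfolding Z_def by (rule X_prod_bnd) (use \<sigma>P N0 GaG in auto)
  have Y01: "0 \<le> Y r \<omega> \<and> Y r \<omega> \<le> 1" if "r < N" "\<omega> \<in> space M" for r \<omega>
    unfolding Y_def by (rule X_prod01) (use \<sigma>P that N0 GaG in auto)
  have W01: "0 \<le> W r \<omega> \<and> W r \<omega> \<le> 1" if "r < N" "\<omega> \<in> space M" for r \<omega>
    unfolding W_def by (rule X_prod01) (use \<sigma>P that N0 GaG in auto)
  have Z01: "0 \<le> Z \<omega> \<and> Z \<omega> \<le> 1" if "\<omega> \<in> space M" for \<omega>
    unfolding Z_def by (rule X_prod01) (use \<sigma>P that N0 GaG in auto)
  have rka: "1 \<le> rk V a" "rk V a < rk V b" "rk V b \<le> card V"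
    using rk_bounds[OF fV aV] rk_bounds[OF fV bV] rk_mono[OF fV aV bV ab(1)] by auto
  have A1': "1 \<le> A0" unfolding A0_def using N1 rka by (metis mult_le_mono nat_mult_1)
  have AB': "A0 + N \<le> B0"
  proof -
    have "N * (rk V a + 1) \<le> N * rk V b" using rka by (intro mult_le_mono2) auto
    then show ?thesis unfolding A0_def B0_def by (simp add: algebra_simps)
  qed
  have Bn': "B0 + N \<le> n + 1"
  proof -
    have "N * (rk V b + 1) \<le> N * (card V + 1)" using rka by (intro mult_le_mono2) auto
    moreover have "B0 + N = N * (rk V b + 1)" unfolding B0_def by (simp add: algebra_simps)
    ultimately show ?thesis using NV by linarith
  qed
  interpret C: core M X n \<eta> \<theta> N A0 B0 Y W Z
    by (intro core.intro arr_axioms core_axioms.intro N1 A1' AB' Bn' bY bW bZ Y01 W01 Z01)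
  define FG where "FG r r' = (\<lambda>\<omega>. \<Prod>s\<in>G. X (\<sigma> r r' ` s) \<omega>)" for r r'
  define FG' where "FG' r r' = (\<lambda>\<omega>. \<Prod>s\<in>G-{e}. X (\<sigma> r r' ` s) \<omega>)" for r r'
  have bFG: "bnd (FG r r')" "bnd (FG' r r')" if "r < N" "r' < N" for r r'
    unfolding FG_def FG'_def by (rule X_prod_bnd, use \<sigma>P that in auto)+
  have Spt: "C.S = (\<lambda>\<omega>. \<Sum>r<N. \<Sum>r'<N. FG r r' \<omega> - p * FG' r r' \<omega>)"
  proof
    fix \<omega>
    have "C.S \<omega> = (\<Sum>r<N. \<Sum>r'<N. Z \<omega> * (Y r \<omega> * ((C.x r r' \<omega> - p) * W r' \<omega>)))"
      by (simp add: C.S_def C.H_def sum_distrib_left)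
    also have "\<dots> = (\<Sum>r<N. \<Sum>r'<N. FG r r' \<omega> - p * FG' r r' \<omega>)"
      by (intro sum.cong refl) (simp add: FG_def FG'_def prodG prodG' C.x_def algebra_simps)
    finally show "C.S \<omega> = (\<Sum>r<N. \<Sum>r'<N. FG r r' \<omega> - p * FG' r r' \<omega>)" .
  qed
  have ES: "expectation C.S = (\<Sum>r<N. \<Sum>r'<N. expectation (FG r r') - p * expectation (FG' r r'))"
  proof -
    have "expectation C.S = (\<Sum>r<N. expectation (\<lambda>\<omega>. \<Sum>r'<N. FG r r' \<omega> - p * FG' r r' \<omega>))"
      unfolding Spt by (rule E_sum) (auto intro!: bnd_intros bFG)
    also have "\<dots> = (\<Sum>r<N. \<Sum>r'<N. expectation (\<lambda>\<omega>. FG r r' \<omega> - p * FG' r r' \<omega>))"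
      by (intro sum.cong refl E_sum) (auto intro!: bnd_intros bFG)
    also have "\<dots> = (\<Sum>r<N. \<Sum>r'<N. expectation (FG r r') - p * expectation (FG' r r'))"
      by (intro sum.cong refl) (auto simp: E_diff E_cmult bnd_intros bFG)
    finally show ?thesis .
  qed
  define D where "D = expectation (\<lambda>\<omega>. \<Prod>s\<in>G. X s \<omega>) - p * expectation (\<lambda>\<omega>. \<Prod>s\<in>G-{e}. X s \<omega>)"
  have each: "\<bar>D - (expectation (FG r r') - p * expectation (FG' r r'))\<bar> \<le> 2 * \<eta>" if "r < N" "r' < N" for r r'
  proof -
    have "\<bar>expectation (\<lambda>\<omega>. \<Prod>s\<in>G-{e}. X s \<omega>) - expectation (FG' r r')\<bar> \<le> \<eta>"
      using tr2[OF that] unfolding FG'_def .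
    then have "p * \<bar>expectation (\<lambda>\<omega>. \<Prod>s\<in>G-{e}. X s \<omega>) - expectation (FG' r r')\<bar> \<le> 1 * \<eta>"
      using p01 eta by (intro mult_mono) auto
    moreover have "\<bar>expectation (\<lambda>\<omega>. \<Prod>s\<in>G. X s \<omega>) - expectation (FG r r')\<bar> \<le> \<eta>"
      using tr1[OF that] unfolding FG_def .
    moreover have "D - (expectation (FG r r') - p * expectation (FG' r r'))
       = (expectation (\<lambda>\<omega>. \<Prod>s\<in>G. X s \<omega>) - expectation (FG r r'))
         - p * (expectation (\<lambda>\<omega>. \<Prod>s\<in>G-{e}. X s \<omega>) - expectation (FG' r r'))"
      unfolding D_def by (simp add: algebra_simps)
    moreover have "\<bar>p * (expectation (\<lambda>\<omega>. \<Prod>s\<in>G-{e}. X s \<omega>) - expectation (FG' r r'))\<bar>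
       = p * \<bar>expectation (\<lambda>\<omega>. \<Prod>s\<in>G-{e}. X s \<omega>) - expectation (FG' r r')\<bar>"
      using p01 by (simp add: abs_mult)
    ultimately show ?thesis by (smt (verit) abs_triangle_ineq4)
  qed
  have "\<bar>real N ^ 2 * D - expectation C.S\<bar> \<le> real N ^ 2 * (2 * \<eta>)"
  proof -
    have "real N ^ 2 * D = (\<Sum>r<N. \<Sum>r'<N. D)" by (simp add: power2_eq_square)
    then have "real N ^ 2 * D - expectation C.S = (\<Sum>r<N. \<Sum>r'<N. D - (expectation (FG r r') - p * expectation (FG' r r')))"
      unfolding ES by (simp add: sum_subtractf)
    also have "\<bar>\<dots>\<bar> \<le> (\<Sum>r<N. \<Sum>r'<N. \<bar>D - (expectation (FG r r') - p * expectation (FG' r r'))\<bar>)"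
      by (rule order.trans[OF sum_abs sum_mono[OF sum_abs]])
    also have "\<dots> \<le> (\<Sum>r<N. \<Sum>r'<N. 2 * \<eta>)"
      by (intro sum_mono each) auto
    also have "\<dots> = real N ^ 2 * (2 * \<eta>)" by (simp add: power2_eq_square)
    finally show ?thesis .
  qed
  define s where "s = expectation C.S / real N ^ 2"
  have Npos: "0 < real N ^ 2" using N1 by simp
  have "\<bar>D - s\<bar> \<le> 2 * \<eta>"
  proof -
    have "D - s = (real N ^ 2 * D - expectation C.S) / real N ^ 2"
      unfolding s_def using Npos by (simp add: diff_divide_distrib)
    then have "\<bar>D - s\<bar> = \<bar>real N ^ 2 * D - expectation C.S\<bar> / real N ^ 2"
      using Npos by (simp add: abs_divide)
    also have "\<dots> \<le> real N ^ 2 * (2 * \<eta>) / real N ^ 2"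
      by (rule divide_right_mono[OF \<open>\<bar>real N ^ 2 * D - expectation C.S\<bar> \<le> real N ^ 2 * (2 * \<eta>)\<close>]) simp
    also have "\<dots> = 2 * \<eta>" using Npos by simp
    finally show ?thesis .
  qed
  then have c1: "\<bar>D\<bar> \<le> 2 * \<eta> + \<bar>s\<bar>" by linarith
  have N8: "(real N ^ 2) ^ 4 = real N ^ 8" by (simp only: power_mult[symmetric]) simp
  have "s^4 = (expectation C.S)^4 / real N ^ 8" unfolding s_def power_divide N8 ..
  also have "\<dots> \<le> real N ^ 8 * (3 * \<theta> + 72 * \<eta> + 6 / real N + 6 * sqrt C.eps) / real N ^ 8"
    by (rule divide_right_mono[OF C.core]) simp
  also have "\<dots> = 3 * \<theta> + 72 * \<eta> + 6 / real N + 6 * sqrt C.eps"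
    using Npos by simp
  finally have c2: "s^4 \<le> 3 * \<theta> + 72 * \<eta> + 6 / real N + 6 * sqrt (\<theta> + 16 * \<eta> + 2 / real N)"
    unfolding C.eps_def .
  show ?thesis using c1 c2 unfolding D_def by (intro exI[of _ s] conjI)
qed

end

lemma arith_final:
  fixes x \<theta> \<eta> N :: real
  assumes x: "0 < x" "x \<le> 1" and th: "0 < \<theta>" "\<theta> \<le> x^16" and et: "0 < \<eta>" "\<eta> \<le> x^16"
    and N: "0 < N" "1 / N \<le> x^8"
  shows "3 * \<theta> + 72 * \<eta> + 6 / N + 6 * sqrt (\<theta> + 16 * \<eta> + 2 / N) \<le> (4 * x)^4"
proof -
  have x16: "x^16 \<le> x^8" and x8: "x^8 \<le> x^4" using x by (auto intro!: power_decreasing)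
  have "\<theta> + 16 * \<eta> + 2 / N \<le> (5 * x^4)^2"
  proof -
    have "2 / N = 2 * (1 / N)" by simp
    then have "\<theta> + 16 * \<eta> + 2 / N \<le> 19 * x^8" using th et N x16 by linarith
    also have "\<dots> \<le> (5 * x^4)^2" by (simp add: power_mult_distrib power_mult[symmetric])
    finally show ?thesis .
  qed
  then have sq: "sqrt (\<theta> + 16 * \<eta> + 2 / N) \<le> 5 * x^4"
  proof -
    have "sqrt (\<theta> + 16 * \<eta> + 2 / N) \<le> sqrt ((5 * x^4)^2)" using \<open>\<theta> + 16 * \<eta> + 2 / N \<le> (5 * x^4)^2\<close> by simp
    also have "sqrt ((5 * x^4)^2) = 5 * x^4" using x by (simp only: real_sqrt_abs) simp
    finally show ?thesis .
  qed
  have "6 / N = 6 * (1 / N)" by simp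
  then have "3 * \<theta> + 72 * \<eta> + 6 / N + 6 * sqrt (\<theta> + 16 * \<eta> + 2 / N) \<le> 75 * x^4 + 6 * x^4 + 30 * x^4"
    using th et N x16 x8 sq by linarith
  also have "\<dots> \<le> (4 * x)^4" using x by (simp add: power_mult_distrib)
  finally show ?thesis .
qed

lemma N_bound:
  fixes u :: real and n q k :: nat
  assumes u: "400 \<le> u" and n: "u^16 \<le> real n" and q: "1 \<le> q" "real q \<le> 3 * real k" and k: "real k * 400 < u"
  shows "0 < real (n div q)" "1 / real (n div q) \<le> (1/u)^8"
proof -
  have upos: "0 < u" using u by simp
  have "real n < (real (n div q) + 1) * real q"
  proof -
    have "n < (n div q + 1) * q" using dividend_less_div_times[of q n] q by (simp add: algebra_simps)
    then show ?thesis by (metis of_nat_add of_nat_less_iff of_nat_mult of_nat_1)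
  qed
  then have "real n / real q - 1 < real (n div q)" using q by (simp add: field_simps)
  moreover have "u^15 \<le> real n / real q"
  proof -
    have "real q * 400 \<le> 3 * u" using q k by linarith
    then have "real q \<le> u" using u by linarith
    then have "u^15 * real q \<le> u^15 * u" using upos by (intro mult_left_mono) auto
    also have "\<dots> = u^16" by (simp add: power_Suc2[symmetric])
    also have "\<dots> \<le> real n" by (rule n)
    finally show ?thesis using q by (simp add: field_simps)
  qed
  moreover have "u^8 + 1 \<le> u^15"
  proof -
    have "u^8 * 1 \<le> u^8 * u^7 - u^8 * 1"
    proof -
      have "1 \<le> u^6" using u by (simp add: one_le_power)
      then have "u * 1 \<le> u * u^6" using upos by (intro mult_left_mono) auto
      moreover have "u * u^6 = u^7" by (simp add: power_Suc[symmetric] del: power_Suc)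
      ultimately have "(2::real) \<le> u^7" using u by linarith
      then have "u^8 * 2 \<le> u^8 * u^7" using upos by (intro mult_left_mono) auto
      then show ?thesis by simp
    qed
    moreover have "u^8 * u^7 = u^15" by (simp add: power_add[symmetric])
    moreover have "1 \<le> u^8" using u by (simp add: one_le_power)
    ultimately show ?thesis by linarith
  qed
  ultimately have Nb: "u^8 \<le> real (n div q)" by linarith
  have "0 < u^8" using upos by simp
  then show "0 < real (n div q)" using Nb by linarith
  show "1 / real (n div q) \<le> (1/u)^8"
    using Nb \<open>0 < u^8\<close> by (simp add: power_one_over frac_le)
qed

context arr begin

lemma telescope:
  assumes F: "F \<subseteq> pairs {1..n}"
    and stp: "\<And>G e. G \<subseteq> F \<Longrightarrow> e \<in> G \<Longrightarrow>
      \<bar>expectation (\<lambda>\<omega>. \<Prod>s\<in>G. X s \<omega>) - p * expectation (\<lambda>\<omega>. \<Prod>s\<in>G-{e}. X s \<omega>)\<bar> \<le> \<delta>"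
  shows "finite G \<Longrightarrow> G \<subseteq> F \<Longrightarrow> \<bar>expectation (\<lambda>\<omega>. \<Prod>s\<in>G. X s \<omega>) - p ^ card G\<bar> \<le> real (card G) * \<delta>"
proof (induction G rule: finite_induct)
  case empty
  then show ?case by (simp add: prob_space)
next
  case (insert e G)
  have GF: "G \<subseteq> F" using insert by auto
  have IH: "\<bar>expectation (\<lambda>\<omega>. \<Prod>s\<in>G. X s \<omega>) - p ^ card G\<bar> \<le> real (card G) * \<delta>"
    using insert GF by auto
  have diff: "insert e G - {e} = G" using insert by auto
  have st: "\<bar>expectation (\<lambda>\<omega>. \<Prod>s\<in>insert e G. X s \<omega>) - p * expectation (\<lambda>\<omega>. \<Prod>s\<in>G. X s \<omega>)\<bar> \<le> \<delta>"
    using stp[of "insert e G" e] insert diff by auto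
  then have d0: "0 \<le> \<delta>" by linarith
  have "p * \<bar>expectation (\<lambda>\<omega>. \<Prod>s\<in>G. X s \<omega>) - p ^ card G\<bar> \<le> 1 * (real (card G) * \<delta>)"
    using IH p01 d0 by (intro mult_mono) auto
  then have "\<bar>p * expectation (\<lambda>\<omega>. \<Prod>s\<in>G. X s \<omega>) - p ^ Suc (card G)\<bar> \<le> real (card G) * \<delta>"
    using p01 by (simp add: abs_mult right_diff_distrib[symmetric])
  then have "\<bar>expectation (\<lambda>\<omega>. \<Prod>s\<in>insert e G. X s \<omega>) - p ^ Suc (card G)\<bar> \<le> \<delta> + real (card G) * \<delta>"
    using st by linarith
  then show ?case using insert by (simp add: algebra_simps)
qed

lemma prodE:
  "finite F \<Longrightarrow> F \<subseteq> pairs {1..n} \<Longrightarrow> \<bar>(\<Prod>s\<in>F. expectation (X s)) - p ^ card F\<bar> \<le> real (card F) * \<eta>"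
proof (induction F rule: finite_induct)
  case empty then show ?case by simp
next
  case (insert e F)
  have eP: "e \<in> pairs {1..n}" and FP: "F \<subseteq> pairs {1..n}" using insert by auto
  define a where "a = expectation (X e)"
  define b where "b = (\<Prod>s\<in>F. expectation (X s))"
  have b01: "0 \<le> b" "b \<le> 1" unfolding b_def using EX01 FP by (auto intro!: prod_nonneg prod_le_1)
  have ae: "\<bar>a - p\<bar> \<le> \<eta>" unfolding a_def by (rule Ep[OF eP])
  have IH: "\<bar>b - p ^ card F\<bar> \<le> real (card F) * \<eta>" unfolding b_def using insert FP by auto
  have "a * b - p * p ^ card F = (a - p) * b + p * (b - p ^ card F)" by (simp add: algebra_simps)
  then have "\<bar>a * b - p * p ^ card F\<bar> \<le> \<bar>a - p\<bar> * b + p * \<bar>b - p ^ card F\<bar>"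
  proof -
    have "\<bar>(a - p) * b + p * (b - p ^ card F)\<bar> \<le> \<bar>(a - p) * b\<bar> + \<bar>p * (b - p ^ card F)\<bar>" by (rule abs_triangle_ineq)
    also have "\<dots> = \<bar>a - p\<bar> * b + p * \<bar>b - p ^ card F\<bar>" using b01 p01 by (simp add: abs_mult)
    finally show ?thesis using \<open>a * b - p * p ^ card F = (a - p) * b + p * (b - p ^ card F)\<close> by simp
  qed
  also have "\<dots> \<le> \<eta> * 1 + 1 * (real (card F) * \<eta>)"
    using ae b01 p01 IH by (intro add_mono mult_mono) auto
  finally show ?case using insert unfolding a_def b_def by (simp add: algebra_simps)
qed

lemma pw16: assumes "0 < t" shows "(t powr (1/16)) ^ 16 = (t::real)"
proof -
  have "(t powr (1/16)) ^ 16 = (t powr (1/16)) powr (real 16)" by (rule powr_realpow[symmetric]) (use assms in simp)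
  also have "\<dots> = t powr (1/16 * real 16)" by (rule powr_powr)
  finally show ?thesis using assms by simp
qed

lemma pwn16: assumes "0 < t" shows "(t powr (-1/16)) ^ 16 = 1 / (t::real)"
proof -
  have "(t powr (-1/16)) ^ 16 = (t powr (-1/16)) powr (real 16)" by (rule powr_realpow[symmetric]) (use assms in simp)
  also have "\<dots> = t powr (-1/16 * real 16)" by (rule powr_powr)
  finally show ?thesis using assms by (simp add: powr_minus_divide)
qed

lemma main:
  assumes F: "F \<subseteq> pairs {1..n}" and Fne: "F \<noteq> {}" and half: "real (card (\<Union>F)) \<le> real n / 2"
  shows "\<bar>(\<integral>\<omega>. (\<Prod>s\<in>F. X s \<omega>) \<partial>M) - (\<Prod>s\<in>F. \<integral>\<omega>. X s \<omega> \<partial>M)\<bar>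
       \<le> 400 * real (card F) * (real n powr (-1/16) + \<eta> powr (1/16) + \<theta> powr (1/16))"
proof -
  have fF: "finite F" using F pairs_finite finite_subset by blast
  define k where "k = card F"
  have k1: "1 \<le> k" unfolding k_def using fF Fne by (simp add: Suc_le_eq card_gt_0_iff)
  define x where "x = real n powr (-1/16) + \<eta> powr (1/16) + \<theta> powr (1/16)"
  have npos: "0 < real n" using n4 by simp
  have c1: "0 < real n powr (-1/16)" "0 < \<eta> powr (1/16)" "0 < \<theta> powr (1/16)"
    using npos eta theta by auto
  have xpos: "0 < x" unfolding x_def using c1 by linarith
  define L where "L = expectation (\<lambda>\<omega>. \<Prod>s\<in>F. X s \<omega>)"
  define R where "R = (\<Prod>s\<in>F. expectation (X s))"
  have L01: "0 \<le> L" "L \<le> 1" unfolding L_def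
    using X_prod_bnd[of F "\<lambda>s. s"] X_prod01[of F "\<lambda>s. s"] F
    by (auto intro!: E_ge_const E_le_const)
  have R01: "0 \<le> R" "R \<le> 1" unfolding R_def using EX01 F by (auto intro!: prod_nonneg prod_le_1)
  show ?thesis
  proof (cases "1 \<le> 400 * real k * x")
    case True
    have "\<bar>L - R\<bar> \<le> 1" using L01 R01 by linarith
    then show ?thesis using True unfolding L_def R_def k_def x_def by linarith
  next
    case False
    then have small: "400 * real k * x < 1" by simp
    have x1: "x \<le> 1"
    proof -
      have "400 * x \<le> 400 * real k * x" using k1 xpos by (simp add: mult_right_mono)
      then show ?thesis using small by linarith
    qed
    have thx: "\<theta> \<le> x^16"
    proof -
      have "(\<theta> powr (1/16))^16 \<le> x^16" using c1 unfolding x_def by (intro power_mono) auto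
      then show ?thesis using pw16 theta by simp
    qed
    have etx: "\<eta> \<le> x^16"
    proof -
      have "(\<eta> powr (1/16))^16 \<le> x^16" using c1 unfolding x_def by (intro power_mono) auto
      then show ?thesis using pw16 eta by simp
    qed
    have nx: "1 / real n \<le> x^16"
    proof -
      have "(real n powr (-1/16))^16 \<le> x^16" using c1 unfolding x_def by (intro power_mono) auto
      then show ?thesis using pwn16[OF npos] by simp
    qed
    define u where "u = 1 / x"
    have upos: "0 < u" unfolding u_def using xpos by simp
    have ku: "real k * 400 < u" unfolding u_def using small xpos by (simp add: field_simps)
    have u400: "400 \<le> u" using ku k1 by (smt (verit) of_nat_1 of_nat_le_iff)
    have un: "u^16 \<le> real n"
    proof -
      have "1 / x^16 \<le> real n" using nx npos xpos by (simp add: field_simps)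
      then show ?thesis unfolding u_def by (simp add: power_one_over)
    qed
    have xu: "x = 1 / u" unfolding u_def using xpos by simp
    have m2k: "card (\<Union>F) \<le> 2 * k"
    proof -
      have "card (\<Union>F) \<le> sum card F" by (rule card_Union_le_sum_card)
      also have "\<dots> = sum (\<lambda>_. 2) F" using F by (intro sum.cong refl) (auto simp: pairs_def)
      finally show ?thesis unfolding k_def by simp
    qed
    have stepb: "\<bar>expectation (\<lambda>\<omega>. \<Prod>s\<in>G. X s \<omega>) - p * expectation (\<lambda>\<omega>. \<Prod>s\<in>G-{e}. X s \<omega>)\<bar> \<le> 6 * x"
      if G: "G \<subseteq> F" "e \<in> G" for G e
    proof -
      have UG: "card (\<Union>G) \<le> card (\<Union>F)"
      proof (rule card_mono)
        have "\<Union>F \<subseteq> {1..n}" using F unfolding pairs_def by auto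
        then show "finite (\<Union>F)" using finite_subset by blast
        show "\<Union>G \<subseteq> \<Union>F" using G by auto
      qed
      have q1: "card (\<Union>G) + 1 \<le> n"
      proof -
        have "real (card (\<Union>G)) \<le> real n / 2" using UG half by linarith
        then have "2 * card (\<Union>G) \<le> n" by linarith
        then show ?thesis using n4 by linarith
      qed
      define N where "N = n div (card (\<Union>G) + 1)"
      have GP: "G \<subseteq> pairs {1..n}" using G F by auto
      have ex: "\<exists>s. \<bar>expectation (\<lambda>\<omega>. \<Prod>s\<in>G. X s \<omega>) - p * expectation (\<lambda>\<omega>. \<Prod>s\<in>G-{e}. X s \<omega>)\<bar> \<le> 2 * \<eta> + \<bar>s\<bar>
        \<and> s^4 \<le> 3 * \<theta> + 72 * \<eta> + 6 / real N + 6 * sqrt (\<theta> + 16 * \<eta> + 2 / real N)"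
        by (rule step[OF GP G(2) q1 N_def])
      then obtain s where s: "\<bar>expectation (\<lambda>\<omega>. \<Prod>s\<in>G. X s \<omega>) - p * expectation (\<lambda>\<omega>. \<Prod>s\<in>G-{e}. X s \<omega>)\<bar> \<le> 2 * \<eta> + \<bar>s\<bar>"
        and s4: "s^4 \<le> 3 * \<theta> + 72 * \<eta> + 6 / real N + 6 * sqrt (\<theta> + 16 * \<eta> + 2 / real N)"
        by (elim exE conjE)
      have q3: "real (card (\<Union>G) + 1) \<le> 3 * real k" using UG m2k k1 by linarith
      have one_q: "1 \<le> card (\<Union>G) + 1" by simp
      have Nb1: "0 < real N" unfolding N_def by (rule N_bound(1)[OF u400 un one_q q3 ku])
      have Nb2: "1 / real N \<le> (1/u)^8" unfolding N_def by (rule N_bound(2)[OF u400 un one_q q3 ku])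
      have Nb2': "1 / real N \<le> x^8" using Nb2 unfolding xu .
      have AF: "3 * \<theta> + 72 * \<eta> + 6 / real N + 6 * sqrt (\<theta> + 16 * \<eta> + 2 / real N) \<le> (4 * x)^4"
        by (rule arith_final[OF xpos x1 theta(1) thx eta(1) etx Nb1 Nb2'])
      have "s^4 \<le> (4 * x)^4" using s4 AF by linarith
      then have "\<bar>s\<bar>^4 \<le> (4 * x)^4" by (simp add: power_abs)
      then have "\<bar>s\<bar> ^ Suc 3 \<le> (4 * x) ^ Suc 3" by (simp add: numeral_eq_Suc)
      then have "\<bar>s\<bar> \<le> 4 * x" by (rule power_le_imp_le_base) (use xpos in simp)
      moreover have "\<eta> \<le> x"
      proof -
        have "x^16 \<le> x^1" using xpos x1 by (intro power_decreasing) auto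
        then show ?thesis using etx by simp
      qed
      ultimately show ?thesis using s by linarith
    qed
    have T: "\<bar>L - p ^ k\<bar> \<le> real k * (6 * x)"
      unfolding L_def k_def by (rule telescope[OF F stepb fF order.refl])
    have P: "\<bar>R - p ^ k\<bar> \<le> real k * \<eta>"
      unfolding R_def k_def by (rule prodE[OF fF F])
    have "\<eta> \<le> x"
    proof -
      have "x^16 \<le> x^1" using xpos x1 by (intro power_decreasing) auto
      then show ?thesis using etx by simp
    qed
    then have "real k * \<eta> \<le> real k * x" by (intro mult_left_mono) auto
    then have "\<bar>L - R\<bar> \<le> 7 * real k * x" using T P by linarith
    also have "\<dots> \<le> 400 * real k * x" using xpos by (intro mult_right_mono) auto
    finally show ?thesis unfolding L_def R_def k_def x_def .
  qed
qed

end

theorem theorem1p5: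
  fixes M :: "'a measure" and X :: "nat set \<Rightarrow> 'a \<Rightarrow> real"
    and n :: nat and \<eta> \<theta> :: real
  assumes "prob_space M"
    and "n \<ge> 4"
    and "0 < \<eta>" "\<eta> \<le> 1" "0 < \<theta>" "\<theta> \<le> 1"
    and meas: "\<And>s. s \<in> pairs {1..n} \<Longrightarrow> X s \<in> borel_measurable M"
    and bin: "\<And>s \<omega>. s \<in> pairs {1..n} \<Longrightarrow> \<omega> \<in> space M \<Longrightarrow> X s \<omega> \<in> {0, 1}"
    and spr: "spreadable M n \<eta> X"
    and box: "\<And>i j k l. 1 \<le> i \<Longrightarrow> i < j \<Longrightarrow> j < k \<Longrightarrow> k < l \<Longrightarrow> l \<le> n \<Longrightarrow>
       (\<integral>\<omega>. X {i,k} \<omega> * X {i,l} \<omega> * X {j,k} \<omega> * X {j,l} \<omega> \<partial>M)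
         \<le> (\<integral>\<omega>. X {i,k} \<omega> \<partial>M) * (\<integral>\<omega>. X {i,l} \<omega> \<partial>M)
            * (\<integral>\<omega>. X {j,k} \<omega> \<partial>M) * (\<integral>\<omega>. X {j,l} \<omega> \<partial>M) + \<theta>"
  shows "\<forall>F. F \<subseteq> pairs {1..n} \<longrightarrow> F \<noteq> {} \<longrightarrow> real (card (\<Union>F)) \<le> real n / 2 \<longrightarrow>
     \<bar>(\<integral>\<omega>. (\<Prod>s\<in>F. X s \<omega>) \<partial>M) - (\<Prod>s\<in>F. \<integral>\<omega>. X s \<omega> \<partial>M)\<bar>
       \<le> 400 * real (card F) * (real n powr (-1/16) + \<eta> powr (1/16) + \<theta> powr (1/16))"
proof -
  interpret A: arr M X n \<eta> \<theta>
    by (rule arr.intro) (use assms in auto)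
  show ?thesis
    by (intro allI impI) (rule A.main; assumption)
qed

end
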